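(* Let $\mathbb K$ be a commutative semiring with $0\ne1$ and let $R:\Delta^*\to K$ be an algebraic formal power series. Then there is a regular nested word series $S:\mathrm{NW}(\Delta)\to K$ such that $\pi(S)=R$.
   Context: Nested words: $\Delta$ finite alphabet. A nesting relation of width $n$ is a relation $\nu$ on $[n]$ with: $\nu(i,j)\Rightarrow i<j$; $\nu(i,j),\nu(i,j')\Rightarrow j=j'$ and $\nu(i,j),\nu(i',j)\Rightarrow i=i'$; $\nu(i,j),\nu(i',j'),i<i'\Rightarrow j<i'$ or $j'<j$. A nested word is $(w,\nu)$, $w=a_1\cdots a_n\in\Delta^+$, $\nu$ of width $n$; $\mathrm{NW}(\Delta)$ is their set. If $\nu(i,j)$, $i$ is a call and $j$ a return position; others are internal. WNWA over $\mathbb K$: $\mathcal A=(Q,\iota,\delta_{call},\delta_{int},\delta_{ret},\kappa)$, $Q$ finite, $\delta_{call},\delta_{int}:Q\times\Delta\times Q\to K$, $\delta_{ret}:Q\times Q\times\Delta\times Q\to K$, $\iota,\kappa:Q\to K$. A run on $(a_1\cdots a_n,\nu)$ is $(q_0,\dots,q_n)$; weight at $j$: $\delta_{call}(q_{j-1},a_j,q_j)$ for a call $j$, $\delta_{int}(q_{j-1},a_j,q_j)$ for internal $j$, $\delta_{ret}(q_{j-1},q_{i-1},a_j,q_j)$ if $\nu(i,j)$; run weight is the product. $\|\mathcal A\|(nw)=\sum_{(q_0..q_n)}\iota(q_0)\mathrm{wt}\,\kappa(q_n)$. A series is regular if it equals some $\|\mathcal A\|$. Projection: $\pi(w,\nu)=w$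 and $\pi(S)(w)=\sum_{nw\in\mathrm{NW}(\Delta),\,\pi(nw)=w}S(nw)$ for $w\in\Delta^*$. Algebraic series: formal power series are maps $\Delta^*\to K$; $\varepsilon$ the empty word; pointwise sum and scalar product, Cauchy product $(S_1S_2)(w)=\sum_{w=w_1w_2}S_1(w_1)S_2(w_2)$; words identified with their characteristic series. For a finite variable set $\mathcal X$ disjoint from $\Delta$, a polynomial is a finitely supported map $(\Delta\cup\mathcal X)^*\to K$; an algebraic system is a family $(P_X)_{X\in\mathcal X}$ of polynomials; a solution is $(S_X)_{X\in\mathcal X}$ with $S_X=\sum (P_X,u_1X_1\cdots u_kX_ku_{k+1})\,u_1S_{X_1}\cdots u_kS_{X_k}u_{k+1}$ over the support of $P_X$ ($u_j\in\Delta^*$, $X_j\in\mathcal X$). Proper: $P_X(Y)=P_X(\varepsilon)=0$ for all $X,Y$; quasiregular: $S(\varepsilon)=0$. A proper system has exactly one quasiregular solution; a series is algebraic if it is a component of the quasiregular solution of a proper algebraic system. *)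

theory Defs
  imports Main
begin

text \<open>Positions are 1-based: position j of a word w carries the letter w ! (j - 1).
  A nesting relation of width n is a set of pairs of positions in {1..n}.\<close>

definition nesting :: "nat \<Rightarrow> (nat \<times> nat) set \<Rightarrow> bool" where
  "nesting n \<nu> \<longleftrightarrow>
     \<nu> \<subseteq> {1..n} \<times> {1..n} \<and>
     (\<forall>i j. (i, j) \<in> \<nu> \<longrightarrow> i < j) \<and>
     (\<forall>i j j'. (i, j) \<in> \<nu> \<longrightarrow> (i, j') \<in> \<nu> \<longrightarrow> j = j') \<and>
     (\<forall>i i' j. (i, j) \<in> \<nu> \<longrightarrow> (i', j) \<in> \<nu> \<longrightarrow> i = i') \<and>
     (\<forall>i j i' j'. (i, j) \<in> \<nu> \<longrightarrow> (i', j') \<in> \<nu> \<longrightarrow> i < i' \<longrightarrow> j < i' \<or> j' < j)"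

type_synonym 'a nword = "'a list \<times> (nat \<times> nat) set"

definition NW :: "'a nword set" where
  "NW = {(w, \<nu>). w \<noteq> [] \<and> nesting (length w) \<nu>}"

definition is_call :: "(nat \<times> nat) set \<Rightarrow> nat \<Rightarrow> bool" where
  "is_call \<nu> j \<longleftrightarrow> (\<exists>k. (j, k) \<in> \<nu>)"

definition is_return :: "(nat \<times> nat) set \<Rightarrow> nat \<Rightarrow> bool" where
  "is_return \<nu> j \<longleftrightarrow> (\<exists>i. (i, j) \<in> \<nu>)"

definition call_of :: "(nat \<times> nat) set \<Rightarrow> nat \<Rightarrow> nat" where
  "call_of \<nu> j = (THE i. (i, j) \<in> \<nu>)"

definition pos_weight ::
  "(nat \<Rightarrow> 'a \<Rightarrow> nat \<Rightarrow> 'k) \<Rightarrow> (nat \<Rightarrow> 'a \<Rightarrow> nat \<Rightarrow> 'k) \<Rightarrow>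
   (nat \<Rightarrow> nat \<Rightarrow> 'a \<Rightarrow> nat \<Rightarrow> 'k) \<Rightarrow> 'a nword \<Rightarrow> nat list \<Rightarrow> nat \<Rightarrow> 'k" where
  "pos_weight dcall dint dret nw r j =
     (let w = fst nw; \<nu> = snd nw in
      if is_call \<nu> j then dcall (r ! (j - 1)) (w ! (j - 1)) (r ! j)
      else if is_return \<nu> j then dret (r ! (j - 1)) (r ! (call_of \<nu> j - 1)) (w ! (j - 1)) (r ! j)
      else dint (r ! (j - 1)) (w ! (j - 1)) (r ! j))"

definition runs :: "nat set \<Rightarrow> nat \<Rightarrow> nat list set" where
  "runs Q n = {r. length r = Suc n \<and> set r \<subseteq> Q}"

definition wnwa_behaviour ::
  "nat set \<Rightarrow> (nat \<Rightarrow> 'k::comm_semiring_1) \<Rightarrow> (nat \<Rightarrow> 'a \<Rightarrow> nat \<Rightarrow> 'k) \<Rightarrow>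
   (nat \<Rightarrow> 'a \<Rightarrow> nat \<Rightarrow> 'k) \<Rightarrow> (nat \<Rightarrow> nat \<Rightarrow> 'a \<Rightarrow> nat \<Rightarrow> 'k) \<Rightarrow> (nat \<Rightarrow> 'k) \<Rightarrow>
   'a nword \<Rightarrow> 'k" where
  "wnwa_behaviour Q \<iota> dcall dint dret \<kappa> nw =
     (\<Sum>r \<in> runs Q (length (fst nw)).
        \<iota> (r ! 0) * (\<Prod>j \<in> {1..length (fst nw)}. pos_weight dcall dint dret nw r j)
          * \<kappa> (r ! length (fst nw)))"

definition regular_nw_series :: "('a nword \<Rightarrow> 'k::comm_semiring_1) \<Rightarrow> bool" where
  "regular_nw_series S \<longleftrightarrow>
     (\<exists>Q \<iota> dcall dint dret \<kappa>. finite Q \<and>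
        (\<forall>nw \<in> NW. S nw = wnwa_behaviour Q \<iota> dcall dint dret \<kappa> nw))"

definition proj :: "('a nword \<Rightarrow> 'k::comm_semiring_1) \<Rightarrow> 'a list \<Rightarrow> 'k" where
  "proj S w = (\<Sum>\<nu> \<in> {\<nu>. (w, \<nu>) \<in> NW}. S (w, \<nu>))"

definition char_series :: "'a list \<Rightarrow> 'a list \<Rightarrow> 'k::comm_semiring_1" where
  "char_series u w = (if w = u then 1 else 0)"

definition cauchy :: "('a list \<Rightarrow> 'k::comm_semiring_1) \<Rightarrow> ('a list \<Rightarrow> 'k) \<Rightarrow> 'a list \<Rightarrow> 'k" where
  "cauchy S1 S2 w = (\<Sum>i\<le>length w. S1 (take i w) * S2 (drop i w))"

fun subst_word :: "(nat \<Rightarrow> 'a list \<Rightarrow> 'k::comm_semiring_1) \<Rightarrow> ('a + nat) list \<Rightarrow> 'a list \<Rightarrow> 'k" where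
  "subst_word S [] = char_series []"
| "subst_word S (Inl a # u) = cauchy (char_series [a]) (subst_word S u)"
| "subst_word S (Inr X # u) = cauchy (S X) (subst_word S u)"

text \<open>An algebraic system over the finite variable set V: P X is a polynomial
  (finitely supported map on words over letters and variables of V) for X in V.\<close>
definition alg_system :: "nat set \<Rightarrow> (nat \<Rightarrow> ('a + nat) list \<Rightarrow> 'k::comm_semiring_1) \<Rightarrow> bool" where
  "alg_system V P \<longleftrightarrow> finite V \<and>
     (\<forall>X \<in> V. finite {u. P X u \<noteq> 0} \<and>
        (\<forall>u. P X u \<noteq> 0 \<longrightarrow> (\<forall>Y. Inr Y \<in> set u \<longrightarrow> Y \<in> V)))"

definition proper_system :: "nat set \<Rightarrow> (nat \<Rightarrow> ('a + nat) list \<Rightarrow> 'k::comm_semiring_1) \<Rightarrow> bool" where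
  "proper_system V P \<longleftrightarrow> (\<forall>X \<in> V. P X [] = 0 \<and> (\<forall>Y \<in> V. P X [Inr Y] = 0))"

definition is_solution ::
  "nat set \<Rightarrow> (nat \<Rightarrow> ('a + nat) list \<Rightarrow> 'k::comm_semiring_1) \<Rightarrow> (nat \<Rightarrow> 'a list \<Rightarrow> 'k) \<Rightarrow> bool" where
  "is_solution V P S \<longleftrightarrow>
     (\<forall>X \<in> V. S X = (\<lambda>w. \<Sum>u \<in> {u. P X u \<noteq> 0}. P X u * subst_word S u w))"

definition quasiregular :: "('a list \<Rightarrow> 'k::comm_semiring_1) \<Rightarrow> bool" where
  "quasiregular S \<longleftrightarrow> S [] = 0"

definition algebraic_series :: "('a list \<Rightarrow> 'k::comm_semiring_1) \<Rightarrow> bool" where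
  "algebraic_series R \<longleftrightarrow>
     (\<exists>V P S X0. alg_system V P \<and> proper_system V P \<and> X0 \<in> V \<and>
        is_solution V P S \<and> (\<forall>X \<in> V. quasiregular (S X)) \<and> R = S X0)"

end

theory Submission
  imports Defs
begin


definition shiftr :: "nat \<Rightarrow> (nat \<times> nat) set \<Rightarrow> (nat \<times> nat) set" where
  "shiftr d \<nu> = (\<lambda>(i,j). (i+d, j+d)) ` \<nu>"

definition unshift :: "nat \<Rightarrow> (nat \<times> nat) set \<Rightarrow> (nat \<times> nat) set" where
  "unshift d \<nu> = (\<lambda>(i,j). (i-d, j-d)) ` \<nu>"

definition wrapr :: "nat \<Rightarrow> (nat \<times> nat) set \<Rightarrow> (nat \<times> nat) set" where
  "wrapr m \<nu> = insert (1, m+2) (shiftr 1 \<nu>)"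

lemma mem_shiftr: "(a,b) \<in> shiftr d \<nu> \<longleftrightarrow> d \<le> a \<and> d \<le> b \<and> (a-d, b-d) \<in> \<nu>"
  unfolding shiftr_def by force

lemma nestingI:
  assumes "\<And>i j. (i,j) \<in> \<nu> \<Longrightarrow> 1 \<le> i \<and> i < j \<and> j \<le> n"
    "\<And>i j j'. (i, j) \<in> \<nu> \<Longrightarrow> (i, j') \<in> \<nu> \<Longrightarrow> j = j'"
    "\<And>i i' j. (i, j) \<in> \<nu> \<Longrightarrow> (i', j) \<in> \<nu> \<Longrightarrow> i = i'"
    "\<And>i j i' j'. (i, j) \<in> \<nu> \<Longrightarrow> (i', j') \<in> \<nu> \<Longrightarrow> i < i' \<Longrightarrow> j < i' \<or> j' < j"
  shows "nesting n \<nu>"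
  unfolding nesting_def
proof (intro conjI allI impI subsetI)
  fix x assume "x \<in> \<nu>" then show "x \<in> {1..n} \<times> {1..n}" using assms(1)[of "fst x" "snd x"] by (cases x) auto
qed (use assms in blast)+

lemma nestingD:
  assumes "nesting n \<nu>"
  shows "\<And>i j. (i,j) \<in> \<nu> \<Longrightarrow> 1 \<le> i \<and> i < j \<and> j \<le> n"
    "\<And>i j j'. (i, j) \<in> \<nu> \<Longrightarrow> (i, j') \<in> \<nu> \<Longrightarrow> j = j'"
    "\<And>i i' j. (i, j) \<in> \<nu> \<Longrightarrow> (i', j) \<in> \<nu> \<Longrightarrow> i = i'"
    "\<And>i j i' j'. (i, j) \<in> \<nu> \<Longrightarrow> (i', j') \<in> \<nu> \<Longrightarrow> i < i' \<Longrightarrow> j < i' \<or> j' < j"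
proof -
  show "\<And>i j. (i,j) \<in> \<nu> \<Longrightarrow> 1 \<le> i \<and> i < j \<and> j \<le> n" using assms unfolding nesting_def by auto
  show "\<And>i j j'. (i, j) \<in> \<nu> \<Longrightarrow> (i, j') \<in> \<nu> \<Longrightarrow> j = j'" using assms unfolding nesting_def by blast
  show "\<And>i i' j. (i, j) \<in> \<nu> \<Longrightarrow> (i', j) \<in> \<nu> \<Longrightarrow> i = i'" using assms unfolding nesting_def by blast
  show "\<And>i j i' j'. (i, j) \<in> \<nu> \<Longrightarrow> (i', j') \<in> \<nu> \<Longrightarrow> i < i' \<Longrightarrow> j < i' \<or> j' < j"
    using assms unfolding nesting_def by blast
qed

lemma nesting_empty: "nesting n {}"
  by (rule nestingI) auto

lemma nesting_0: "nesting 0 \<nu> \<longleftrightarrow> \<nu> = {}"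
  using nestingD(1)[of 0 \<nu>] nesting_empty by fastforce

lemma nesting_concat:
  assumes "nesting n1 \<nu>1" "nesting n2 \<nu>2"
  shows "nesting (n1+n2) (\<nu>1 \<union> shiftr n1 \<nu>2)"
proof (rule nestingI)
  note A = nestingD[OF assms(1)] and B = nestingD[OF assms(2)]
  let ?U = "\<nu>1 \<union> shiftr n1 \<nu>2"
  have C: "(i,j) \<in> ?U \<longleftrightarrow> (i,j) \<in> \<nu>1 \<or> (n1 < i \<and> n1 < j \<and> (i-n1, j-n1) \<in> \<nu>2)" for i j
    using B(1)[of "i-n1" "j-n1"] by (auto simp: mem_shiftr)
  show "1 \<le> i \<and> i < j \<and> j \<le> n1 + n2" if "(i,j) \<in> ?U" for i j
    using that A(1)[of i j] B(1)[of "i-n1" "j-n1"] unfolding C by auto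
  show "j = j'" if H: "(i,j) \<in> ?U" "(i,j') \<in> ?U" for i j j'
  proof -
    consider "(i,j) \<in> \<nu>1" "(i,j') \<in> \<nu>1" | "(i,j) \<in> \<nu>1" "n1 < i"
      | "n1 < i" "(i,j') \<in> \<nu>1" | "n1 < j" "n1 < j'" "(i-n1, j-n1) \<in> \<nu>2" "(i-n1, j'-n1) \<in> \<nu>2"
      using H[unfolded C] by blast
    then show ?thesis
    proof cases
      case 1 then show ?thesis using A(2) by blast
    next
      case 2 then show ?thesis using A(1)[of i j] by auto
    next
      case 3 then show ?thesis using A(1)[of i j'] by auto
    next
      case 4 then have "j - n1 = j' - n1" using B(2) by blast
      with 4 show ?thesis by arith
    qed
  qed
  show "i = i'" if H: "(i,j) \<in> ?U" "(i',j) \<in> ?U" for i i' j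
  proof -
    consider "(i,j) \<in> \<nu>1" "(i',j) \<in> \<nu>1" | "(i,j) \<in> \<nu>1" "n1 < j"
      | "n1 < j" "(i',j) \<in> \<nu>1" | "n1 < i" "n1 < i'" "(i-n1, j-n1) \<in> \<nu>2" "(i'-n1, j-n1) \<in> \<nu>2"
      using H[unfolded C] by blast
    then show ?thesis
    proof cases
      case 1 then show ?thesis using A(3) by blast
    next
      case 2 then show ?thesis using A(1)[of i j] by auto
    next
      case 3 then show ?thesis using A(1)[of i' j] by auto
    next
      case 4 then have "i - n1 = i' - n1" using B(3) by blast
      with 4 show ?thesis by arith
    qed
  qed
  show "j < i' \<or> j' < j" if H: "(i,j) \<in> ?U" "(i',j') \<in> ?U" "i < i'" for i j i' j'
  proof -
    consider "(i,j) \<in> \<nu>1" "(i',j') \<in> \<nu>1" | "(i,j) \<in> \<nu>1" "n1 < i'"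
      | "n1 < i" "(i',j') \<in> \<nu>1" | "n1 < i" "n1 < j" "n1 < i'" "n1 < j'" "(i-n1, j-n1) \<in> \<nu>2" "(i'-n1, j'-n1) \<in> \<nu>2"
      using H[unfolded C] by blast
    then show ?thesis
    proof cases
      case 1 then show ?thesis using A(4) H(3) by blast
    next
      case 2 then show ?thesis using A(1)[of i j] by auto
    next
      case 3 then show ?thesis using A(1)[of i' j'] H(3) by auto
    next
      case 4 then have "j - n1 < i' - n1 \<or> j' - n1 < j - n1" using B(4) H(3)
        by (metis diff_less_mono less_or_eq_imp_le)
      with 4 show ?thesis by arith
    qed
  qed
qed


lemma mem_wrapr:
  assumes "nesting m \<nu>"
  shows "(i,j) \<in> wrapr m \<nu> \<longleftrightarrow> (i = 1 \<and> j = m+2) \<or> (1 < i \<and> 1 < j \<and> (i-1, j-1) \<in> \<nu>)"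
  using nestingD(1)[OF assms, of "i-1" "j-1"] unfolding wrapr_def by (auto simp: mem_shiftr)

lemma nesting_wrap:
  assumes "nesting m \<nu>"
  shows "nesting (m+2) (wrapr m \<nu>)"
proof (rule nestingI)
  note A = nestingD[OF assms]
  note C = mem_wrapr[OF assms]
  show "1 \<le> i \<and> i < j \<and> j \<le> m+2" if "(i,j) \<in> wrapr m \<nu>" for i j
    using that A(1)[of "i-1" "j-1"] unfolding C by auto
  show "j = j'" if H: "(i,j) \<in> wrapr m \<nu>" "(i,j') \<in> wrapr m \<nu>" for i j j'
  proof -
    have "j - 1 = j' - 1" if "1 < i" "1 < j" "1 < j'" "(i-1,j-1) \<in> \<nu>" "(i-1,j'-1) \<in> \<nu>"
      using A(2) that by blast
    then show ?thesis using H unfolding C by auto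
  qed
  show "i = i'" if H: "(i,j) \<in> wrapr m \<nu>" "(i',j) \<in> wrapr m \<nu>" for i i' j
  proof -
    have "i - 1 = i' - 1" if "1 < i" "1 < i'" "1 < j" "(i-1,j-1) \<in> \<nu>" "(i'-1,j-1) \<in> \<nu>"
      using A(3) that by blast
    then show ?thesis using H A(1)[of "i-1" "j-1"] A(1)[of "i'-1" "j-1"] unfolding C by auto
  qed
  show "j < i' \<or> j' < j" if H: "(i,j) \<in> wrapr m \<nu>" "(i',j') \<in> wrapr m \<nu>" "i < i'" for i j i' j'
  proof -
    have "j - 1 < i' - 1 \<or> j' - 1 < j - 1" if "1 < i" "1 < i'" "1 < j" "1 < j'" "(i-1,j-1) \<in> \<nu>" "(i'-1,j'-1) \<in> \<nu>"
      using A(4) that H(3) by (metis diff_less_mono less_or_eq_imp_le)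
    then show ?thesis using H A(1)[of "i-1" "j-1"] A(1)[of "i'-1" "j'-1"] unfolding C by auto
  qed
qed

lemma nesting_shift1:
  assumes "nesting n \<nu>"
  shows "nesting (Suc n) (shiftr 1 \<nu>)"
  using nesting_concat[OF nesting_empty[of 1] assms] by simp

lemma call_of_eq:
  assumes "nesting n \<nu>" "(i,j) \<in> \<nu>"
  shows "call_of \<nu> j = i"
  unfolding call_of_def using nestingD(3)[OF assms(1)] assms(2) by blast


lemma is_call_concat_left:
  assumes "nesting n1 \<nu>1" "nesting n2 \<nu>2" "j \<le> n1"
  shows "is_call (\<nu>1 \<union> shiftr n1 \<nu>2) j \<longleftrightarrow> is_call \<nu>1 j"
    "is_return (\<nu>1 \<union> shiftr n1 \<nu>2) j \<longleftrightarrow> is_return \<nu>1 j"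
  using assms nestingD(1)[OF assms(2)] unfolding is_call_def is_return_def
  by (auto simp: mem_shiftr)

lemma is_call_concat_right:
  assumes "nesting n1 \<nu>1" "nesting n2 \<nu>2" "n1 < j"
  shows "is_call (\<nu>1 \<union> shiftr n1 \<nu>2) j \<longleftrightarrow> is_call \<nu>2 (j - n1)"
    "is_return (\<nu>1 \<union> shiftr n1 \<nu>2) j \<longleftrightarrow> is_return \<nu>2 (j - n1)"
proof -
  note A = nestingD(1)[OF assms(1)]
  show "is_call (\<nu>1 \<union> shiftr n1 \<nu>2) j \<longleftrightarrow> is_call \<nu>2 (j - n1)"
  proof
    assume "is_call (\<nu>1 \<union> shiftr n1 \<nu>2) j"
    then obtain k where "(j,k) \<in> \<nu>1 \<union> shiftr n1 \<nu>2" unfolding is_call_def by blast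
    then show "is_call \<nu>2 (j - n1)" using A[of j k] assms(3) unfolding is_call_def by (auto simp: mem_shiftr)
  next
    assume "is_call \<nu>2 (j - n1)"
    then obtain k where "(j - n1, k) \<in> \<nu>2" unfolding is_call_def by blast
    then have "(j, k + n1) \<in> shiftr n1 \<nu>2" using assms(3) by (auto simp: mem_shiftr)
    then show "is_call (\<nu>1 \<union> shiftr n1 \<nu>2) j" unfolding is_call_def by blast
  qed
  show "is_return (\<nu>1 \<union> shiftr n1 \<nu>2) j \<longleftrightarrow> is_return \<nu>2 (j - n1)"
  proof
    assume "is_return (\<nu>1 \<union> shiftr n1 \<nu>2) j"
    then obtain k where "(k,j) \<in> \<nu>1 \<union> shiftr n1 \<nu>2" unfolding is_return_def by blast
    then show "is_return \<nu>2 (j - n1)" using A[of k j] assms(3) unfolding is_return_def by (auto simp: mem_shiftr)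
  next
    assume "is_return \<nu>2 (j - n1)"
    then obtain k where "(k, j - n1) \<in> \<nu>2" unfolding is_return_def by blast
    then have "(k + n1, j) \<in> shiftr n1 \<nu>2" using assms(3) by (auto simp: mem_shiftr)
    then show "is_return (\<nu>1 \<union> shiftr n1 \<nu>2) j" unfolding is_return_def by blast
  qed
qed

lemma pw_concat_left:
  assumes "nesting n1 \<nu>1" "nesting n2 \<nu>2" "length w1 = n1" "1 \<le> j" "j \<le> n1" "n1 < length r"
  shows "pos_weight dc di dr (w1 @ w2, \<nu>1 \<union> shiftr n1 \<nu>2) r j
       = pos_weight dc di dr (w1, \<nu>1) (take (Suc n1) r) j"
proof -
  let ?U = "\<nu>1 \<union> shiftr n1 \<nu>2"
  have U: "nesting (n1+n2) ?U" using nesting_concat[OF assms(1,2)] .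
  note ic = is_call_concat_left[OF assms(1,2,5)]
  have co: "call_of ?U j = call_of \<nu>1 j \<and> call_of \<nu>1 j < j \<and> 1 \<le> call_of \<nu>1 j" if R: "is_return \<nu>1 j"
  proof -
    obtain i where i: "(i,j) \<in> \<nu>1" using R unfolding is_return_def by blast
    then show ?thesis using call_of_eq[OF U, of i j] call_of_eq[OF assms(1) i] nestingD(1)[OF assms(1) i] by auto
  qed
  have "j - 1 < n1" using assms by arith
  then have w: "(w1 @ w2) ! (j - 1) = w1 ! (j - 1)" using assms by (simp add: nth_append)
  show ?thesis unfolding pos_weight_def Let_def fst_conv snd_conv ic w
    using co assms by (auto simp: nth_take)
qed

lemma pw_concat_right:
  assumes "nesting n1 \<nu>1" "nesting n2 \<nu>2" "length w1 = n1" "n1 < j" "j \<le> n1 + n2" "length r = Suc (n1 + n2)"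
  shows "pos_weight dc di dr (w1 @ w2, \<nu>1 \<union> shiftr n1 \<nu>2) r j
       = pos_weight dc di dr (w2, \<nu>2) (drop n1 r) (j - n1)"
proof -
  let ?U = "\<nu>1 \<union> shiftr n1 \<nu>2"
  have U: "nesting (n1+n2) ?U" using nesting_concat[OF assms(1,2)] .
  note ic = is_call_concat_right[OF assms(1,2,4)]
  have co: "call_of ?U j = call_of \<nu>2 (j - n1) + n1 \<and> 1 \<le> call_of \<nu>2 (j - n1)" if R: "is_return \<nu>2 (j - n1)"
  proof -
    obtain i where i: "(i,j - n1) \<in> \<nu>2" using R unfolding is_return_def by blast
    then have "(i + n1, j) \<in> ?U" using assms(4) by (auto simp: mem_shiftr)
    then show ?thesis using call_of_eq[OF U, of "i+n1" j] call_of_eq[OF assms(2) i] nestingD(1)[OF assms(2) i] by auto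
  qed
  have "\<not> j - 1 < n1" "j - 1 - n1 = j - n1 - 1" using assms by arith+
  then have w: "(w1 @ w2) ! (j - 1) = w2 ! (j - n1 - 1)" using assms by (simp add: nth_append)
  have r: "r ! k = drop n1 r ! (k - n1)" if "n1 \<le> k" "k < length r" for k
    using that by simp
  show ?thesis unfolding pos_weight_def Let_def fst_conv snd_conv ic w
    using co assms r by (auto simp: Suc_diff_le add.commute)
qed


definition Wt where
  "Wt dc di dr \<nu> w r = (\<Prod>j\<in>{1..length w}. pos_weight dc di dr (w,\<nu>) r j)"

definition RS where
  "RS Q dc di dr \<nu> w p q = (\<Sum>r\<in>{r\<in>runs Q (length w). r!0 = p \<and> r!length w = q}. Wt dc di dr \<nu> w r)"

lemma finite_runs: "finite Q \<Longrightarrow> finite (runs Q n)"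
  unfolding runs_def using finite_lists_length_eq[of Q "Suc n"] by (simp add: conj_commute)

lemma Wt_concat:
  assumes "nesting n1 \<nu>1" "nesting n2 \<nu>2" "length w1 = n1" "length w2 = n2" "length r = Suc (n1 + n2)"
  shows "Wt dc di dr (\<nu>1 \<union> shiftr n1 \<nu>2) (w1 @ w2) r
       = Wt dc di dr \<nu>1 w1 (take (Suc n1) r) * Wt dc di dr \<nu>2 w2 (drop n1 r)"
proof -
  have split: "{1..n1+n2} = {1..n1} \<union> {n1+1..n1+n2}" by auto
  have "Wt dc di dr (\<nu>1 \<union> shiftr n1 \<nu>2) (w1 @ w2) r
     = (\<Prod>j\<in>{1..n1}. pos_weight dc di dr (w1 @ w2, \<nu>1 \<union> shiftr n1 \<nu>2) r j)
     * (\<Prod>j\<in>{n1+1..n1+n2}. pos_weight dc di dr (w1 @ w2, \<nu>1 \<union> shiftr n1 \<nu>2) r j)"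
    unfolding Wt_def using assms by (simp only: length_append, subst split, intro prod.union_disjoint) auto
  also have "(\<Prod>j\<in>{1..n1}. pos_weight dc di dr (w1 @ w2, \<nu>1 \<union> shiftr n1 \<nu>2) r j)
      = Wt dc di dr \<nu>1 w1 (take (Suc n1) r)"
    unfolding Wt_def using assms by (intro prod.cong refl pw_concat_left) auto
  also have "(\<Prod>j\<in>{n1+1..n1+n2}. pos_weight dc di dr (w1 @ w2, \<nu>1 \<union> shiftr n1 \<nu>2) r j)
      = (\<Prod>j\<in>{n1+1..n1+n2}. pos_weight dc di dr (w2, \<nu>2) (drop n1 r) (j - n1))"
    using assms by (intro prod.cong refl pw_concat_right) auto
  also have "\<dots> = Wt dc di dr \<nu>2 w2 (drop n1 r)"
    unfolding Wt_def using assms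
    by (intro prod.reindex_bij_witness[of _ "\<lambda>j. j+n1" "\<lambda>j. j-n1"]) auto
  finally show ?thesis .
qed


lemma RS_concat:
  fixes dc di :: "nat \<Rightarrow> 'a \<Rightarrow> nat \<Rightarrow> 'k::comm_semiring_1"
  assumes Q: "finite Q" and "nesting n1 \<nu>1" "nesting n2 \<nu>2" "length w1 = n1" "length w2 = n2"
  shows "RS Q dc di dr (\<nu>1 \<union> shiftr n1 \<nu>2) (w1 @ w2) p q
       = (\<Sum>m\<in>Q. RS Q dc di dr \<nu>1 w1 p m * RS Q dc di dr \<nu>2 w2 m q)"
proof -
  let ?R = "{r\<in>runs Q (n1+n2). r!0 = p \<and> r!(n1+n2) = q}"
  let ?R1 = "\<lambda>m. {r\<in>runs Q n1. r!0 = p \<and> r!n1 = m}"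
  let ?R2 = "\<lambda>m. {r\<in>runs Q n2. r!0 = m \<and> r!n2 = q}"
  let ?W = "\<lambda>r. Wt dc di dr (\<nu>1 \<union> shiftr n1 \<nu>2) (w1 @ w2) r"
  have fR: "finite ?R" using finite_runs[OF Q] by auto
  have "RS Q dc di dr (\<nu>1 \<union> shiftr n1 \<nu>2) (w1 @ w2) p q = sum ?W ?R"
    unfolding RS_def using assms by simp
  also have "\<dots> = (\<Sum>m\<in>Q. \<Sum>r\<in>{r\<in>?R. r!n1 = m}. ?W r)"
    by (rule sum.group[symmetric]) (use fR Q in \<open>auto simp: runs_def\<close>)
  also have "\<dots> = (\<Sum>m\<in>Q. RS Q dc di dr \<nu>1 w1 p m * RS Q dc di dr \<nu>2 w2 m q)"
  proof (rule sum.cong[OF refl])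
    fix m assume m: "m \<in> Q"
    have "(\<Sum>r\<in>{r\<in>?R. r!n1 = m}. ?W r)
        = (\<Sum>(r1,r2)\<in>?R1 m \<times> ?R2 m. Wt dc di dr \<nu>1 w1 r1 * Wt dc di dr \<nu>2 w2 r2)"
    proof (rule sum.reindex_bij_witness[of _ "\<lambda>(r1,r2). r1 @ tl r2" "\<lambda>r. (take (Suc n1) r, drop n1 r)"])
      fix r assume r: "r \<in> {r\<in>?R. r!n1 = m}"
      then have lr: "length r = Suc (n1+n2)" by (auto simp: runs_def)
      show "(case (take (Suc n1) r, drop n1 r) of (r1, r2) \<Rightarrow> r1 @ tl r2) = r"
        using lr by (simp add: tl_drop) (metis append_take_drop_id drop_Suc)
      show "(take (Suc n1) r, drop n1 r) \<in> ?R1 m \<times> ?R2 m"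
        using r lr by (auto simp: runs_def dest: in_set_takeD in_set_dropD)
      show "(case (take (Suc n1) r, drop n1 r) of (r1, r2) \<Rightarrow> Wt dc di dr \<nu>1 w1 r1 * Wt dc di dr \<nu>2 w2 r2) = ?W r"
        using Wt_concat[OF assms(2-5) lr, where dc=dc and di=di and dr=dr] by simp
    next
      fix x assume x: "x \<in> ?R1 m \<times> ?R2 m"
      obtain r1 r2 where x': "x = (r1, r2)" by (cases x)
      have l1: "length r1 = Suc n1" and l2: "length r2 = Suc n2" and e: "r1 ! n1 = r2 ! 0"
        using x x' by (auto simp: runs_def)
      have r2: "r2 = r2 ! 0 # tl r2" using l2 by (cases r2) auto
      have d: "drop n1 r1 = [r1 ! n1]" using l1 by (metis Cons_nth_drop_Suc drop_all le_refl lessI)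
      show "(take (Suc n1) (case x of (r1, r2) \<Rightarrow> r1 @ tl r2), drop n1 (case x of (r1, r2) \<Rightarrow> r1 @ tl r2)) = x"
        using l1 l2 e d r2 x' by simp
      show "(case x of (r1, r2) \<Rightarrow> r1 @ tl r2) \<in> {r\<in>?R. r!n1 = m}"
      proof -
        obtain h t where ht: "r2 = h # t" using l2 by (cases r2) auto
        show ?thesis using x x' l1 l2 e unfolding ht by (auto simp: runs_def nth_append)
      qed
    qed
    also have "\<dots> = RS Q dc di dr \<nu>1 w1 p m * RS Q dc di dr \<nu>2 w2 m q"
      unfolding RS_def sum_product sum.cartesian_product using assms by simp
    finally show "(\<Sum>r\<in>{r\<in>?R. r!n1 = m}. ?W r) = RS Q dc di dr \<nu>1 w1 p m * RS Q dc di dr \<nu>2 w2 m q" .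
  qed
  finally show ?thesis .
qed


lemma pw_wrap_mid:
  assumes "nesting m \<nu>" "length u = m" "length R' = Suc m" "2 \<le> j" "j \<le> Suc m"
  shows "pos_weight dc di dr (a # u @ [b], wrapr m \<nu>) (p # R' @ [q]) j = pos_weight dc di dr (u, \<nu>) R' (j - 1)"
proof -
  note C = mem_wrapr[OF assms(1)]
  note A = nestingD(1)[OF assms(1)]
  have W: "nesting (m+2) (wrapr m \<nu>)" by (rule nesting_wrap[OF assms(1)])
  have ic: "is_call (wrapr m \<nu>) j \<longleftrightarrow> is_call \<nu> (j - 1)"
  proof
    assume "is_call (wrapr m \<nu>) j"
    then obtain k where "(j,k) \<in> wrapr m \<nu>" unfolding is_call_def by blast
    then show "is_call \<nu> (j - 1)" using assms(4) unfolding C is_call_def by auto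
  next
    assume "is_call \<nu> (j - 1)"
    then obtain k where "(j - 1, k) \<in> \<nu>" unfolding is_call_def by blast
    then have "(j, k+1) \<in> wrapr m \<nu>" using assms(4) A[of "j-1" k] unfolding C by auto
    then show "is_call (wrapr m \<nu>) j" unfolding is_call_def by blast
  qed
  have ir: "is_return (wrapr m \<nu>) j \<longleftrightarrow> is_return \<nu> (j - 1)"
  proof
    assume "is_return (wrapr m \<nu>) j"
    then obtain k where "(k,j) \<in> wrapr m \<nu>" unfolding is_return_def by blast
    then show "is_return \<nu> (j - 1)" using assms(4,5) unfolding C is_return_def by auto
  next
    assume "is_return \<nu> (j - 1)"
    then obtain k where "(k, j - 1) \<in> \<nu>" unfolding is_return_def by blast
    then have "(k+1, j) \<in> wrapr m \<nu>" using assms(4) A[of k "j-1"] unfolding C by auto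
    then show "is_return (wrapr m \<nu>) j" unfolding is_return_def by blast
  qed
  have co: "call_of (wrapr m \<nu>) j = call_of \<nu> (j - 1) + 1 \<and> 1 \<le> call_of \<nu> (j - 1) \<and> call_of \<nu> (j - 1) < j - 1"
    if R: "is_return \<nu> (j - 1)"
  proof -
    obtain i where i: "(i, j - 1) \<in> \<nu>" using R unfolding is_return_def by blast
    then have "(i+1, j) \<in> wrapr m \<nu>" using assms(4) A[of i "j-1"] unfolding C by auto
    then show ?thesis using call_of_eq[OF W, of "i+1" j] call_of_eq[OF assms(1) i] A[OF i] by auto
  qed
  have idx: "(p # R' @ [q]) ! k = R' ! (k - 1)" if "1 \<le> k" "k \<le> Suc m" for k
    using that assms(3) by (cases k) (auto simp: nth_append)
  have wl: "(a # u @ [b]) ! (j - 1) = u ! (j - 1 - 1)"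
    using assms by (cases j) (auto simp: nth_append)
  show ?thesis
    unfolding pos_weight_def Let_def fst_conv snd_conv ic ir wl
    using co assms idx[of j] idx[of "j-1"] idx[of "call_of \<nu> (j - 1) + 1 - 1"]
    by auto
qed

lemma Wt_wrap:
  assumes "nesting m \<nu>" "length u = m" "length R' = Suc m"
  shows "Wt dc di dr (wrapr m \<nu>) (a # u @ [b]) (p # R' @ [q])
       = dc p a (R'!0) * Wt dc di dr \<nu> u R' * dr (R'!m) p b q"
proof -
  note C = mem_wrapr[OF assms(1)]
  note A = nestingD(1)[OF assms(1)]
  have W: "nesting (m+2) (wrapr m \<nu>)" by (rule nesting_wrap[OF assms(1)])
  have set: "{1..length (a # u @ [b])} = insert 1 (insert (m+2) {2..m+1})" using assms(2) by auto
  have c1: "is_call (wrapr m \<nu>) 1" unfolding is_call_def wrapr_def by blast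
  have c2: "\<not> is_call (wrapr m \<nu>) (m+2)" "is_return (wrapr m \<nu>) (m+2)" "call_of (wrapr m \<nu>) (m+2) = 1"
  proof -
    show "\<not> is_call (wrapr m \<nu>) (m+2)"
    proof
      assume "is_call (wrapr m \<nu>) (m+2)"
      then obtain k where "(m+2, k) \<in> wrapr m \<nu>" unfolding is_call_def by blast
      then have "(m+1, k-1) \<in> \<nu>" unfolding C by auto
      from A[OF this] show False by linarith
    qed
    show "is_return (wrapr m \<nu>) (m+2)" unfolding is_return_def C by auto
    show "call_of (wrapr m \<nu>) (m+2) = 1" by (rule call_of_eq[OF W]) (simp add: C)
  qed
  have p1: "pos_weight dc di dr (a # u @ [b], wrapr m \<nu>) (p # R' @ [q]) 1 = dc p a (R'!0)"
    unfolding pos_weight_def Let_def using c1 assms by (simp add: nth_append)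
  have p2: "pos_weight dc di dr (a # u @ [b], wrapr m \<nu>) (p # R' @ [q]) (m+2) = dr (R'!m) p b q"
    unfolding pos_weight_def Let_def using c2 assms by (simp add: nth_append)
  have mid: "(\<Prod>j\<in>{2..m+1}. pos_weight dc di dr (a # u @ [b], wrapr m \<nu>) (p # R' @ [q]) j)
     = Wt dc di dr \<nu> u R'"
  proof -
    have "(\<Prod>j\<in>{2..m+1}. pos_weight dc di dr (a # u @ [b], wrapr m \<nu>) (p # R' @ [q]) j)
       = (\<Prod>j\<in>{2..m+1}. pos_weight dc di dr (u, \<nu>) R' (j - 1))"
      using assms by (intro prod.cong refl pw_wrap_mid) auto
    also have "\<dots> = Wt dc di dr \<nu> u R'"
      unfolding Wt_def using assms
      by (intro prod.reindex_bij_witness[of _ "\<lambda>j. j+1" "\<lambda>j. j-1"]) auto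
    finally show ?thesis .
  qed
  let ?f = "pos_weight dc di dr (a # u @ [b], wrapr m \<nu>) (p # R' @ [q])"
  have "prod ?f (insert 1 (insert (m+2) {2..m+1})) = ?f 1 * prod ?f (insert (m+2) {2..m+1})"
    by (rule prod.insert) auto
  also have "prod ?f (insert (m+2) {2..m+1}) = ?f (m+2) * prod ?f {2..m+1}"
    by (rule prod.insert) auto
  finally show ?thesis unfolding Wt_def set p1 p2 mid[unfolded Wt_def]
    by (simp add: ac_simps)
qed


lemma RS_wrap:
  fixes dc di :: "nat \<Rightarrow> 'a \<Rightarrow> nat \<Rightarrow> 'k::comm_semiring_1"
  assumes Q: "finite Q" and pq: "p \<in> Q" "q \<in> Q" and "nesting m \<nu>" "length u = m"
  shows "RS Q dc di dr (wrapr m \<nu>) (a # u @ [b]) p q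
       = (\<Sum>r\<in>Q. \<Sum>s\<in>Q. dc p a r * RS Q dc di dr \<nu> u r s * dr s p b q)"
proof -
  let ?h = "\<lambda>R'. dc p a (R'!0) * Wt dc di dr \<nu> u R' * dr (R'!m) p b q"
  have "(\<Sum>r\<in>Q. \<Sum>s\<in>Q. dc p a r * RS Q dc di dr \<nu> u r s * dr s p b q)
      = (\<Sum>r\<in>Q. \<Sum>s\<in>Q. \<Sum>R'\<in>{R'\<in>runs Q m. R'!0 = r \<and> R'!m = s}. ?h R')"
    unfolding RS_def using assms(5) by (simp add: sum_distrib_left sum_distrib_right)
  also have "\<dots> = (\<Sum>rs\<in>Q \<times> Q. \<Sum>R'\<in>{R'\<in>runs Q m. (R'!0, R'!m) = rs}. ?h R')"
    unfolding sum.cartesian_product by (intro sum.cong refl) auto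
  also have "\<dots> = (\<Sum>R'\<in>runs Q m. ?h R')"
    by (rule sum.group) (use Q finite_runs[OF Q] in \<open>auto simp: runs_def\<close>)
  also have "\<dots> = RS Q dc di dr (wrapr m \<nu>) (a # u @ [b]) p q"
    unfolding RS_def
  proof (rule sum.reindex_bij_witness[of _ "\<lambda>R. butlast (tl R)" "\<lambda>R'. p # R' @ [q]"])
    fix R' assume R': "R' \<in> runs Q m"
    then have l: "length R' = Suc m" by (simp add: runs_def)
    show "butlast (tl (p # R' @ [q])) = R'" by simp
    show "p # R' @ [q] \<in> {r \<in> runs Q (length (a # u @ [b])). r ! 0 = p \<and> r ! length (a # u @ [b]) = q}"
      using R' l pq assms(5) by (auto simp: runs_def nth_append)
    show "Wt dc di dr (wrapr m \<nu>) (a # u @ [b]) (p # R' @ [q]) = ?h R'"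
      by (rule Wt_wrap[OF assms(4,5) l])
  next
    fix R assume R: "R \<in> {r \<in> runs Q (length (a # u @ [b])). r ! 0 = p \<and> r ! length (a # u @ [b]) = q}"
    then have l: "length R = m + 3" and e: "R!0 = p" "R!(m+2) = q" and s: "set R \<subseteq> Q"
      using assms(5) by (auto simp: runs_def)
    obtain x R1 where R1: "R = x # R1" using l by (cases R) auto
    have l1: "length R1 = m + 2" using l R1 by simp
    then have "R1 \<noteq> []" by auto
    then have "R1 = butlast R1 @ [last R1]" by simp
    moreover have "last R1 = q" using e l1 R1 last_conv_nth[of R1] by (cases R1) auto
    ultimately show "p # butlast (tl R) @ [q] = R" using R1 e by simp
    show "butlast (tl R) \<in> runs Q m" using l s R1 by (auto simp: runs_def dest: in_set_butlastD)
  qed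
  finally show ?thesis ..
qed

lemma RS_single:
  assumes "p \<in> Q" "q \<in> Q"
  shows "RS Q dc di dr {} [a] p q = di p a q"
proof -
  have "{r \<in> runs Q (length [a]). r ! 0 = p \<and> r ! length [a] = q} = {[p,q]}"
  proof (intro set_eqI iffI)
    fix r assume "r \<in> {r \<in> runs Q (length [a]). r ! 0 = p \<and> r ! length [a] = q}"
    then have "length r = 2" "r!0 = p" "r!1 = q" by (auto simp: runs_def)
    then show "r \<in> {[p,q]}" by (cases r; cases "tl r") auto
  qed (use assms in \<open>auto simp: runs_def\<close>)
  moreover have "Wt dc di dr {} [a] [p,q] = di p a q"
    unfolding Wt_def pos_weight_def is_call_def is_return_def by simp
  ultimately show ?thesis unfolding RS_def by simp
qed

lemma RS_nil:
  assumes "p \<in> Q"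
  shows "RS Q dc di dr \<nu> [] p q = (if p = q then 1 else 0)"
proof -
  have rr: "r \<in> runs Q 0 \<longleftrightarrow> (\<exists>x\<in>Q. r = [x])" for r
    by (cases r) (auto simp: runs_def)
  have "{r \<in> runs Q (length []). r ! 0 = p \<and> r ! length [] = q} = (if p = q then {[p]} else {})"
    using assms by (auto simp: rr)
  then show ?thesis unfolding RS_def Wt_def by simp
qed


lemma nesting_subset: "nesting n \<nu> \<Longrightarrow> \<nu>' \<subseteq> \<nu> \<Longrightarrow> nesting n \<nu>'"
  unfolding nesting_def by (meson subset_iff order_trans)

lemma mem_unshift:
  assumes "\<forall>(a,b)\<in>\<nu>. d \<le> a \<and> d \<le> b"
  shows "(x,y) \<in> unshift d \<nu> \<longleftrightarrow> (x+d, y+d) \<in> \<nu>"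
proof
  assume "(x,y) \<in> unshift d \<nu>"
  then obtain a b where "(a,b) \<in> \<nu>" "x = a - d" "y = b - d" unfolding unshift_def by auto
  with assms show "(x+d, y+d) \<in> \<nu>" by auto
next
  assume "(x+d, y+d) \<in> \<nu>"
  then show "(x,y) \<in> unshift d \<nu>" unfolding unshift_def by (auto intro!: image_eqI[where x="(x+d,y+d)"])
qed

lemma unshift_shiftr: "unshift d (shiftr d \<nu>) = \<nu>"
proof (intro set_eqI)
  fix z :: "nat \<times> nat" obtain x y where z: "z = (x,y)" by (cases z)
  have "\<forall>(a,b)\<in>shiftr d \<nu>. d \<le> a \<and> d \<le> b" by (auto simp: mem_shiftr)
  from mem_unshift[OF this] show "z \<in> unshift d (shiftr d \<nu>) \<longleftrightarrow> z \<in> \<nu>"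
    unfolding z by (simp add: mem_shiftr)
qed

lemma shiftr_unshift:
  assumes "\<forall>(a,b)\<in>\<nu>. d \<le> a \<and> d \<le> b"
  shows "shiftr d (unshift d \<nu>) = \<nu>"
proof (intro set_eqI)
  fix z :: "nat \<times> nat" obtain x y where z: "z = (x,y)" by (cases z)
  show "z \<in> shiftr d (unshift d \<nu>) \<longleftrightarrow> z \<in> \<nu>"
    unfolding z mem_shiftr mem_unshift[OF assms] using assms by auto
qed

lemma nesting_unshift:
  assumes N: "nesting M \<nu>" and B: "\<forall>(a,b)\<in>\<nu>. d < a \<and> b \<le> d + n"
  shows "nesting n (unshift d \<nu>)"
proof -
  have B': "\<forall>(a,b)\<in>\<nu>. d \<le> a \<and> d \<le> b" using B nestingD(1)[OF N] by fastforce
  note mu = mem_unshift[OF B']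
  note A = nestingD[OF N]
  show ?thesis
  proof (rule nestingI)
    fix i j assume "(i,j) \<in> unshift d \<nu>"
    then have "(i+d, j+d) \<in> \<nu>" by (simp add: mu)
    then show "1 \<le> i \<and> i < j \<and> j \<le> n" using A(1)[of "i+d" "j+d"] B by auto
  next
    fix i j j' assume "(i,j) \<in> unshift d \<nu>" "(i,j') \<in> unshift d \<nu>"
    then show "j = j'" using A(2)[of "i+d" "j+d" "j'+d"] by (simp add: mu)
  next
    fix i i' j assume "(i,j) \<in> unshift d \<nu>" "(i',j) \<in> unshift d \<nu>"
    then show "i = i'" using A(3)[of "i+d" "j+d" "i'+d"] by (simp add: mu)
  next
    fix i j i' j' assume "(i,j) \<in> unshift d \<nu>" "(i',j') \<in> unshift d \<nu>" "i < i'"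
    then show "j < i' \<or> j' < j" using A(4)[of "i+d" "j+d" "i'+d" "j'+d"] by (simp add: mu)
  qed
qed

lemma finite_nestings: "finite {\<nu>. nesting n \<nu>}"
proof -
  have "{\<nu>. nesting n \<nu>} \<subseteq> Pow ({1..n} \<times> {1..n})" unfolding nesting_def by blast
  then show ?thesis by (rule finite_subset) simp
qed


definition inn :: "nat \<Rightarrow> (nat \<times> nat) set \<Rightarrow> (nat \<times> nat) set" where
  "inn j \<nu> = {(a,b)\<in>\<nu>. 2 \<le> a \<and> b \<le> j+1}"
definition out :: "nat \<Rightarrow> (nat \<times> nat) set \<Rightarrow> (nat \<times> nat) set" where
  "out j \<nu> = {(a,b)\<in>\<nu>. j+3 \<le> a}"

lemma decomp_B:
  assumes N: "nesting (Suc n) \<nu>" and c: "(1, j+2) \<in> \<nu>" and j: "j < n"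
  shows "\<nu> = wrapr j (unshift 1 (inn j \<nu>)) \<union> shiftr (j+2) (unshift (j+2) (out j \<nu>))"
    "nesting j (unshift 1 (inn j \<nu>))"
    "nesting (n - Suc j) (unshift (j+2) (out j \<nu>))"
proof -
  note A = nestingD[OF N]
  have b1: "\<forall>(a,b)\<in>inn j \<nu>. 1 \<le> a \<and> 1 \<le> b" unfolding inn_def using A(1) by fastforce
  have b2: "\<forall>(a,b)\<in>out j \<nu>. j+2 \<le> a \<and> j+2 \<le> b" unfolding out_def using A(1) by fastforce
  have cls: "(a,b) \<in> \<nu> \<Longrightarrow> (a = 1 \<and> b = j+2) \<or> (a,b) \<in> inn j \<nu> \<or> (a,b) \<in> out j \<nu>" for a b
  proof -
    assume ab: "(a,b) \<in> \<nu>"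
    have "a \<ge> 1" "a < b" using A(1)[OF ab] by auto
    consider "a = 1" | "2 \<le> a" "a \<le> j+1" | "a = j+2" | "j+3 \<le> a" using \<open>a \<ge> 1\<close> by atomize_elim arith
    then show ?thesis
    proof cases
      case 1 then show ?thesis using A(2)[OF c] ab by auto
    next
      case 2
      have "j + 2 < a \<or> b < j + 2" using A(4)[OF c ab] 2 by auto
      then show ?thesis using 2 unfolding inn_def using ab by auto
    next
      case 3
      have "j + 2 < a \<or> b < j + 2" using A(4)[OF c ab] 3 by auto
      then show ?thesis using 3 \<open>a < b\<close> by auto
    next
      case 4 then show ?thesis unfolding out_def using ab by auto
    qed
  qed
  show "\<nu> = wrapr j (unshift 1 (inn j \<nu>)) \<union> shiftr (j+2) (unshift (j+2) (out j \<nu>))"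
    unfolding wrapr_def shiftr_unshift[OF b1] shiftr_unshift[OF b2]
    using cls c unfolding inn_def out_def by auto
  show "nesting j (unshift 1 (inn j \<nu>))"
    by (rule nesting_unshift[OF nesting_subset[OF N]]) (auto simp: inn_def)
  show "nesting (n - Suc j) (unshift (j+2) (out j \<nu>))"
    by (rule nesting_unshift[OF nesting_subset[OF N]]) (use A(1) j in \<open>auto simp: out_def\<close>)
qed

lemma inn_out_compose:
  assumes N1: "nesting j \<nu>1" and N2: "nesting k \<nu>2"
  shows "inn j (wrapr j \<nu>1 \<union> shiftr (j+2) \<nu>2) = shiftr 1 \<nu>1"
    "out j (wrapr j \<nu>1 \<union> shiftr (j+2) \<nu>2) = shiftr (j+2) \<nu>2"
proof -
  note A = nestingD(1)[OF N1] and B = nestingD(1)[OF N2]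
  show "inn j (wrapr j \<nu>1 \<union> shiftr (j+2) \<nu>2) = shiftr 1 \<nu>1"
  proof (intro set_eqI)
    fix z :: "nat \<times> nat" obtain x y where z: "z = (x,y)" by (cases z)
    show "z \<in> inn j (wrapr j \<nu>1 \<union> shiftr (j+2) \<nu>2) \<longleftrightarrow> z \<in> shiftr 1 \<nu>1"
      unfolding z inn_def wrapr_def using A[of "x-1" "y-1"] B[of "x-(j+2)" "y-(j+2)"]
      by (auto simp: mem_shiftr)
  qed
  show "out j (wrapr j \<nu>1 \<union> shiftr (j+2) \<nu>2) = shiftr (j+2) \<nu>2"
  proof (intro set_eqI)
    fix z :: "nat \<times> nat" obtain x y where z: "z = (x,y)" by (cases z)
    show "z \<in> out j (wrapr j \<nu>1 \<union> shiftr (j+2) \<nu>2) \<longleftrightarrow> z \<in> shiftr (j+2) \<nu>2"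
      unfolding z out_def wrapr_def using A[of "x-1" "y-1"] B[of "x-(j+2)" "y-(j+2)"]
      by (auto simp: mem_shiftr)
  qed
qed


lemma sum_nestings_Suc:
  fixes g :: "(nat \<times> nat) set \<Rightarrow> 'k::comm_monoid_add"
  shows "(\<Sum>\<nu>\<in>{\<nu>. nesting (Suc n) \<nu>}. g \<nu>)
    = (\<Sum>\<nu>'\<in>{\<nu>. nesting n \<nu>}. g (shiftr 1 \<nu>'))
    + (\<Sum>j<n. \<Sum>\<nu>1\<in>{\<nu>. nesting j \<nu>}. \<Sum>\<nu>2\<in>{\<nu>. nesting (n - Suc j) \<nu>}. g (wrapr j \<nu>1 \<union> shiftr (j+2) \<nu>2))"
proof -
  define A where "A = {\<nu>. nesting (Suc n) \<nu> \<and> \<not> is_call \<nu> 1}"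
  define B where "B = (\<lambda>j. {\<nu>. nesting (Suc n) \<nu> \<and> (1, j+2) \<in> \<nu>})"
  have fA: "finite A" unfolding A_def by (rule finite_subset[OF _ finite_nestings[of "Suc n"]]) auto
  have fB: "finite (B j)" for j unfolding B_def by (rule finite_subset[OF _ finite_nestings[of "Suc n"]]) auto
  have U: "{\<nu>. nesting (Suc n) \<nu>} = A \<union> (\<Union>j\<in>{..<n}. B j)"
  proof (intro set_eqI iffI)
    fix \<nu> assume "\<nu> \<in> {\<nu>. nesting (Suc n) \<nu>}"
    then have N: "nesting (Suc n) \<nu>" by simp
    show "\<nu> \<in> A \<union> (\<Union>j\<in>{..<n}. B j)"
    proof (cases "is_call \<nu> 1")
      case True
      then obtain k where k: "(1,k) \<in> \<nu>" unfolding is_call_def by blast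
      then have "1 < k" "k \<le> Suc n" using nestingD(1)[OF N k] by auto
      then have "k - 2 < n" "(k-2)+2 = k" by auto
      then have "k - 2 < n" "(1, (k-2)+2) \<in> \<nu>" using k by auto
      then show ?thesis unfolding B_def using N by blast
    qed (use N in \<open>auto simp: A_def\<close>)
  qed (auto simp: A_def B_def)
  have disj1: "A \<inter> (\<Union>j\<in>{..<n}. B j) = {}" unfolding A_def B_def is_call_def by blast
  have disj2: "B i \<inter> B j = {}" if "i \<noteq> j" for i j
  proof -
    { fix \<nu> assume "\<nu> \<in> B i" "\<nu> \<in> B j"
      then have "nesting (Suc n) \<nu>" "(1, i+2) \<in> \<nu>" "(1, j+2) \<in> \<nu>" unfolding B_def by auto
      then have "i + 2 = j + 2" using nestingD(2) by blast
      with that have False by simp }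
    then show ?thesis by blast
  qed
  have "(\<Sum>\<nu>\<in>{\<nu>. nesting (Suc n) \<nu>}. g \<nu>) = sum g A + (\<Sum>j<n. sum g (B j))"
    unfolding U using fA fB disj1 disj2
    by (simp add: sum.union_disjoint sum.UNION_disjoint)
  also have "sum g A = (\<Sum>\<nu>'\<in>{\<nu>. nesting n \<nu>}. g (shiftr 1 \<nu>'))"
  proof (rule sum.reindex_bij_witness[of _ "shiftr 1" "unshift 1"])
    fix \<nu> assume "\<nu> \<in> A"
    then have N: "nesting (Suc n) \<nu>" and nc: "\<not> is_call \<nu> 1" by (auto simp: A_def)
    have b: "\<forall>(a,b)\<in>\<nu>. 1 < a \<and> b \<le> 1 + n"
    proof (intro ballI, clarify)
      fix a b assume ab: "(a,b) \<in> \<nu>"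
      then have "a \<noteq> 1" using nc unfolding is_call_def by blast
      then show "1 < a \<and> b \<le> 1 + n" using nestingD(1)[OF N ab] by auto
    qed
    then have b': "\<forall>(a,b)\<in>\<nu>. 1 \<le> a \<and> 1 \<le> b" using nestingD(1)[OF N] by fastforce
    show "shiftr 1 (unshift 1 \<nu>) = \<nu>" by (rule shiftr_unshift[OF b'])
    show "unshift 1 \<nu> \<in> {\<nu>. nesting n \<nu>}" using nesting_unshift[OF N b] by simp
    show "g (shiftr 1 (unshift 1 \<nu>)) = g \<nu>" using shiftr_unshift[OF b'] by simp
  next
    fix \<nu>' assume "\<nu>' \<in> {\<nu>. nesting n \<nu>}"
    then have N: "nesting n \<nu>'" by simp
    show "unshift 1 (shiftr 1 \<nu>') = \<nu>'" by (rule unshift_shiftr)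
    have "\<not> is_call (shiftr 1 \<nu>') 1"
      unfolding is_call_def mem_shiftr using nestingD(1)[OF N] by fastforce
    then show "shiftr 1 \<nu>' \<in> A" unfolding A_def using nesting_shift1[OF N] by simp
  qed
  also have "(\<Sum>j<n. sum g (B j)) = (\<Sum>j<n. \<Sum>\<nu>1\<in>{\<nu>. nesting j \<nu>}. \<Sum>\<nu>2\<in>{\<nu>. nesting (n - Suc j) \<nu>}. g (wrapr j \<nu>1 \<union> shiftr (j+2) \<nu>2))"
  proof (rule sum.cong[OF refl])
    fix j assume "j \<in> {..<n}"
    then have j: "j < n" by simp
    have "sum g (B j) = (\<Sum>(\<nu>1,\<nu>2)\<in>{\<nu>. nesting j \<nu>} \<times> {\<nu>. nesting (n - Suc j) \<nu>}. g (wrapr j \<nu>1 \<union> shiftr (j+2) \<nu>2))"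
    proof (rule sum.reindex_bij_witness[of _ "\<lambda>(\<nu>1,\<nu>2). wrapr j \<nu>1 \<union> shiftr (j+2) \<nu>2"
          "\<lambda>\<nu>. (unshift 1 (inn j \<nu>), unshift (j+2) (out j \<nu>))"])
      fix \<nu> assume "\<nu> \<in> B j"
      then have N: "nesting (Suc n) \<nu>" and c: "(1, j+2) \<in> \<nu>" by (auto simp: B_def)
      note D = decomp_B[OF N c j]
      show "(case (unshift 1 (inn j \<nu>), unshift (j+2) (out j \<nu>)) of (\<nu>1,\<nu>2) \<Rightarrow> wrapr j \<nu>1 \<union> shiftr (j+2) \<nu>2) = \<nu>"
        using D(1) by simp
      show "(unshift 1 (inn j \<nu>), unshift (j+2) (out j \<nu>)) \<in> {\<nu>. nesting j \<nu>} \<times> {\<nu>. nesting (n - Suc j) \<nu>}"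
        using D(2,3) by simp
      show "(case (unshift 1 (inn j \<nu>), unshift (j+2) (out j \<nu>)) of (\<nu>1,\<nu>2) \<Rightarrow> g (wrapr j \<nu>1 \<union> shiftr (j+2) \<nu>2)) = g \<nu>"
        using D(1) by simp
    next
      fix p assume p: "p \<in> {\<nu>. nesting j \<nu>} \<times> {\<nu>. nesting (n - Suc j) \<nu>}"
      obtain \<nu>1 \<nu>2 where pe: "p = (\<nu>1, \<nu>2)" by (cases p)
      have N1: "nesting j \<nu>1" and N2: "nesting (n - Suc j) \<nu>2" using p pe by auto
      show "(unshift 1 (inn j (case p of (\<nu>1,\<nu>2) \<Rightarrow> wrapr j \<nu>1 \<union> shiftr (j+2) \<nu>2)),
             unshift (j+2) (out j (case p of (\<nu>1,\<nu>2) \<Rightarrow> wrapr j \<nu>1 \<union> shiftr (j+2) \<nu>2))) = p"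
        unfolding pe using inn_out_compose[OF N1 N2] by (simp add: unshift_shiftr)
      have "nesting (j + 2 + (n - Suc j)) (wrapr j \<nu>1 \<union> shiftr (j+2) \<nu>2)"
        by (rule nesting_concat[OF nesting_wrap[OF N1] N2])
      moreover have "j + 2 + (n - Suc j) = Suc n" using j by simp
      moreover have "(1, j+2) \<in> wrapr j \<nu>1" unfolding wrapr_def by simp
      ultimately show "(case p of (\<nu>1,\<nu>2) \<Rightarrow> wrapr j \<nu>1 \<union> shiftr (j+2) \<nu>2) \<in> B j"
        unfolding pe B_def by simp
    qed
    then show "sum g (B j) = (\<Sum>\<nu>1\<in>{\<nu>. nesting j \<nu>}. \<Sum>\<nu>2\<in>{\<nu>. nesting (n - Suc j) \<nu>}. g (wrapr j \<nu>1 \<union> shiftr (j+2) \<nu>2))"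
      by (simp add: sum.cartesian_product)
  qed
  finally show ?thesis .
qed


definition Fn where
  "Fn Q dc di dr p w q = (\<Sum>\<nu>\<in>{\<nu>. nesting (length w) \<nu>}. RS Q dc di dr \<nu> w p q)"

lemma Fn_nil:
  assumes "p \<in> Q"
  shows "Fn Q dc di dr p [] q = (if p = q then 1 else 0)"
proof -
  have "{\<nu>. nesting (length []) \<nu>} = {{}}" by (auto simp: nesting_0)
  then show ?thesis unfolding Fn_def by (simp add: RS_nil[OF assms])
qed

lemma swap13: "(\<Sum>y\<in>B. \<Sum>r\<in>C. \<Sum>s\<in>D. \<Sum>t\<in>E. f y r s t) = (\<Sum>r\<in>C. \<Sum>s\<in>D. \<Sum>t\<in>E. \<Sum>y\<in>B. f y r s t)"
  by (subst sum.swap, rule sum.cong[OF refl], subst sum.swap, rule sum.cong[OF refl], rule sum.swap)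

lemma swap23: "(\<Sum>x\<in>A. \<Sum>y\<in>B. \<Sum>r\<in>C. \<Sum>s\<in>D. \<Sum>t\<in>E. f x y r s t) = (\<Sum>r\<in>C. \<Sum>s\<in>D. \<Sum>t\<in>E. \<Sum>x\<in>A. \<Sum>y\<in>B. f x y r s t)"
proof -
  have "(\<Sum>x\<in>A. \<Sum>y\<in>B. \<Sum>r\<in>C. \<Sum>s\<in>D. \<Sum>t\<in>E. f x y r s t) = (\<Sum>x\<in>A. \<Sum>r\<in>C. \<Sum>s\<in>D. \<Sum>t\<in>E. \<Sum>y\<in>B. f x y r s t)"
    by (rule sum.cong[OF refl], rule swap13)
  also have "\<dots> = (\<Sum>r\<in>C. \<Sum>s\<in>D. \<Sum>t\<in>E. \<Sum>x\<in>A. \<Sum>y\<in>B. f x y r s t)"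
    by (rule swap13)
  finally show ?thesis .
qed

lemma sum4: "(c::'k::comm_semiring_1) * (\<Sum>x\<in>A. f x) * d * (\<Sum>y\<in>B. g y) = (\<Sum>x\<in>A. \<Sum>y\<in>B. c * f x * d * g y)"
proof -
  have "c * (\<Sum>x\<in>A. f x) * d * (\<Sum>y\<in>B. g y) = (\<Sum>x\<in>A. c * f x * d) * (\<Sum>y\<in>B. g y)"
    by (simp add: sum_distrib_left sum_distrib_right)
  also have "\<dots> = (\<Sum>x\<in>A. \<Sum>y\<in>B. c * f x * d * g y)" by (rule sum_product)
  finally show ?thesis .
qed

lemma Fn_Cons:
  fixes dc di :: "nat \<Rightarrow> 'a \<Rightarrow> nat \<Rightarrow> 'k::comm_semiring_1"
  assumes Q: "finite Q" and pq: "p \<in> Q" "q \<in> Q"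
  shows "Fn Q dc di dr p (a#w) q = (\<Sum>r\<in>Q. di p a r * Fn Q dc di dr r w q)
    + (\<Sum>j<length w. \<Sum>r\<in>Q. \<Sum>s\<in>Q. \<Sum>t\<in>Q. dc p a r * Fn Q dc di dr r (take j w) s * dr s p (w!j) t
         * Fn Q dc di dr t (drop (Suc j) w) q)"
proof -
  let ?RS = "RS Q dc di dr" and ?F = "Fn Q dc di dr"
  let ?n = "length w"
  have "?F p (a#w) q = (\<Sum>\<nu>'\<in>{\<nu>. nesting ?n \<nu>}. ?RS (shiftr 1 \<nu>') (a#w) p q)
    + (\<Sum>j<?n. \<Sum>\<nu>1\<in>{\<nu>. nesting j \<nu>}. \<Sum>\<nu>2\<in>{\<nu>. nesting (?n - Suc j) \<nu>}. ?RS (wrapr j \<nu>1 \<union> shiftr (j+2) \<nu>2) (a#w) p q)"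
    unfolding Fn_def by (simp add: sum_nestings_Suc)
  also have "(\<Sum>\<nu>'\<in>{\<nu>. nesting ?n \<nu>}. ?RS (shiftr 1 \<nu>') (a#w) p q) = (\<Sum>r\<in>Q. di p a r * ?F r w q)"
  proof -
    have "?RS (shiftr 1 \<nu>') (a#w) p q = (\<Sum>r\<in>Q. di p a r * ?RS \<nu>' w r q)" if "nesting ?n \<nu>'" for \<nu>'
    proof -
      have "?RS (shiftr 1 \<nu>') (a#w) p q = ?RS ({} \<union> shiftr (length [a]) \<nu>') ([a] @ w) p q" by simp
      also have "\<dots> = (\<Sum>r\<in>Q. ?RS {} [a] p r * ?RS \<nu>' w r q)"
        by (rule RS_concat[OF Q nesting_empty that]) auto
      also have "\<dots> = (\<Sum>r\<in>Q. di p a r * ?RS \<nu>' w r q)"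
        by (intro sum.cong refl) (simp add: RS_single pq)
      finally show ?thesis .
    qed
    then have "(\<Sum>\<nu>'\<in>{\<nu>. nesting ?n \<nu>}. ?RS (shiftr 1 \<nu>') (a#w) p q)
        = (\<Sum>\<nu>'\<in>{\<nu>. nesting ?n \<nu>}. \<Sum>r\<in>Q. di p a r * ?RS \<nu>' w r q)" by simp
    also have "\<dots> = (\<Sum>r\<in>Q. di p a r * ?F r w q)"
      unfolding Fn_def sum_distrib_left by (rule sum.swap)
    finally show ?thesis .
  qed
  also have "(\<Sum>j<?n. \<Sum>\<nu>1\<in>{\<nu>. nesting j \<nu>}. \<Sum>\<nu>2\<in>{\<nu>. nesting (?n - Suc j) \<nu>}. ?RS (wrapr j \<nu>1 \<union> shiftr (j+2) \<nu>2) (a#w) p q)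
      = (\<Sum>j<?n. \<Sum>r\<in>Q. \<Sum>s\<in>Q. \<Sum>t\<in>Q. dc p a r * ?F r (take j w) s * dr s p (w!j) t * ?F t (drop (Suc j) w) q)"
  proof (rule sum.cong[OF refl])
    fix j assume "j \<in> {..<?n}"
    then have j: "j < ?n" by simp
    have wd: "a # w = (a # take j w @ [w!j]) @ drop (Suc j) w" using j
      by (simp add: take_Suc_conv_app_nth[symmetric])
    have l1: "length (a # take j w @ [w!j]) = j + 2" and l2: "length (drop (Suc j) w) = ?n - Suc j" using j by auto
    have "?RS (wrapr j \<nu>1 \<union> shiftr (j+2) \<nu>2) (a#w) p q
        = (\<Sum>r\<in>Q. \<Sum>s\<in>Q. \<Sum>t\<in>Q. dc p a r * ?RS \<nu>1 (take j w) r s * dr s p (w!j) t * ?RS \<nu>2 (drop (Suc j) w) t q)"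
      if N1: "nesting j \<nu>1" and N2: "nesting (?n - Suc j) \<nu>2" for \<nu>1 \<nu>2
    proof -
      have "?RS (wrapr j \<nu>1 \<union> shiftr (j+2) \<nu>2) (a#w) p q
          = (\<Sum>t\<in>Q. ?RS (wrapr j \<nu>1) (a # take j w @ [w!j]) p t * ?RS \<nu>2 (drop (Suc j) w) t q)"
        unfolding wd by (rule RS_concat[OF Q nesting_wrap[OF N1] N2 l1 l2])
      also have "\<dots> = (\<Sum>t\<in>Q. (\<Sum>r\<in>Q. \<Sum>s\<in>Q. dc p a r * ?RS \<nu>1 (take j w) r s * dr s p (w!j) t) * ?RS \<nu>2 (drop (Suc j) w) t q)"
        using j by (intro sum.cong refl arg_cong2[where f="(*)"] RS_wrap[OF Q pq(1) _ N1]) auto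
      also have "\<dots> = (\<Sum>t\<in>Q. \<Sum>r\<in>Q. \<Sum>s\<in>Q. dc p a r * ?RS \<nu>1 (take j w) r s * dr s p (w!j) t * ?RS \<nu>2 (drop (Suc j) w) t q)"
        by (simp add: sum_distrib_right)
      also have "\<dots> = (\<Sum>r\<in>Q. \<Sum>s\<in>Q. \<Sum>t\<in>Q. dc p a r * ?RS \<nu>1 (take j w) r s * dr s p (w!j) t * ?RS \<nu>2 (drop (Suc j) w) t q)"
        by (subst sum.swap, rule sum.cong[OF refl], rule sum.swap)
      finally show ?thesis .
    qed
    then have "(\<Sum>\<nu>1\<in>{\<nu>. nesting j \<nu>}. \<Sum>\<nu>2\<in>{\<nu>. nesting (?n - Suc j) \<nu>}. ?RS (wrapr j \<nu>1 \<union> shiftr (j+2) \<nu>2) (a#w) p q)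
       = (\<Sum>\<nu>1\<in>{\<nu>. nesting j \<nu>}. \<Sum>\<nu>2\<in>{\<nu>. nesting (?n - Suc j) \<nu>}. \<Sum>r\<in>Q. \<Sum>s\<in>Q. \<Sum>t\<in>Q. dc p a r * ?RS \<nu>1 (take j w) r s * dr s p (w!j) t * ?RS \<nu>2 (drop (Suc j) w) t q)"
      by (intro sum.cong refl) auto
    also have "\<dots> = (\<Sum>r\<in>Q. \<Sum>s\<in>Q. \<Sum>t\<in>Q. \<Sum>\<nu>1\<in>{\<nu>. nesting j \<nu>}. \<Sum>\<nu>2\<in>{\<nu>. nesting (?n - Suc j) \<nu>}. dc p a r * ?RS \<nu>1 (take j w) r s * dr s p (w!j) t * ?RS \<nu>2 (drop (Suc j) w) t q)"
      by (rule swap23)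
    also have "\<dots> = (\<Sum>r\<in>Q. \<Sum>s\<in>Q. \<Sum>t\<in>Q. dc p a r * ?F r (take j w) s * dr s p (w!j) t * ?F t (drop (Suc j) w) q)"
      unfolding Fn_def using j
      by (simp add: sum4 min_absorb2)
    finally show "(\<Sum>\<nu>1\<in>{\<nu>. nesting j \<nu>}. \<Sum>\<nu>2\<in>{\<nu>. nesting (?n - Suc j) \<nu>}. ?RS (wrapr j \<nu>1 \<union> shiftr (j+2) \<nu>2) (a#w) p q)
       = (\<Sum>r\<in>Q. \<Sum>s\<in>Q. \<Sum>t\<in>Q. dc p a r * ?F r (take j w) s * dr s p (w!j) t * ?F t (drop (Suc j) w) q)" .
  qed
  finally show ?thesis .
qed


lemma behaviour_RS:
  fixes \<iota> :: "nat \<Rightarrow> 'k::comm_semiring_1"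
  assumes Q: "finite Q"
  shows "wnwa_behaviour Q \<iota> dc di dr \<kappa> (w, \<nu>) = (\<Sum>p\<in>Q. \<Sum>q\<in>Q. \<iota> p * RS Q dc di dr \<nu> w p q * \<kappa> q)"
proof -
  let ?h = "\<lambda>r. \<iota> (r ! 0) * Wt dc di dr \<nu> w r * \<kappa> (r ! length w)"
  have "wnwa_behaviour Q \<iota> dc di dr \<kappa> (w, \<nu>) = (\<Sum>r\<in>runs Q (length w). ?h r)"
    unfolding wnwa_behaviour_def Wt_def by simp
  also have "\<dots> = (\<Sum>pq\<in>Q \<times> Q. \<Sum>r\<in>{r\<in>runs Q (length w). (r!0, r!length w) = pq}. ?h r)"
    by (rule sum.group[symmetric]) (use Q finite_runs[OF Q] in \<open>auto simp: runs_def\<close>)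
  also have "\<dots> = (\<Sum>p\<in>Q. \<Sum>q\<in>Q. \<iota> p * RS Q dc di dr \<nu> w p q * \<kappa> q)"
    unfolding sum.cartesian_product RS_def
    by (intro sum.cong refl) (auto simp: sum_distrib_left sum_distrib_right intro!: sum.cong)
  finally show ?thesis .
qed

lemma proj_Fn:
  fixes \<iota> :: "nat \<Rightarrow> 'k::comm_semiring_1"
  assumes Q: "finite Q" and w: "w \<noteq> []"
  shows "proj (wnwa_behaviour Q \<iota> dc di dr \<kappa>) w = (\<Sum>p\<in>Q. \<Sum>q\<in>Q. \<iota> p * Fn Q dc di dr p w q * \<kappa> q)"
proof -
  have "{\<nu>. (w, \<nu>) \<in> NW} = {\<nu>. nesting (length w) \<nu>}" using w unfolding NW_def by auto
  then have "proj (wnwa_behaviour Q \<iota> dc di dr \<kappa>) w = (\<Sum>\<nu>\<in>{\<nu>. nesting (length w) \<nu>}. \<Sum>p\<in>Q. \<Sum>q\<in>Q. \<iota> p * RS Q dc di dr \<nu> w p q * \<kappa> q)"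
    unfolding proj_def by (simp add: behaviour_RS[OF Q])
  also have "\<dots> = (\<Sum>p\<in>Q. \<Sum>q\<in>Q. \<Sum>\<nu>\<in>{\<nu>. nesting (length w) \<nu>}. \<iota> p * RS Q dc di dr \<nu> w p q * \<kappa> q)"
    by (subst sum.swap, rule sum.cong[OF refl], rule sum.swap)
  also have "\<dots> = (\<Sum>p\<in>Q. \<Sum>q\<in>Q. \<iota> p * Fn Q dc di dr p w q * \<kappa> q)"
    unfolding Fn_def by (simp add: sum_distrib_left sum_distrib_right)
  finally show ?thesis .
qed

lemma proj_nil: "proj S [] = 0"
  unfolding proj_def NW_def by simp


lemma cauchy_nil: "cauchy A B [] = A [] * B []"
  unfolding cauchy_def by simp

lemma cauchy_Cons: "cauchy A B (a#w) = A [] * B (a#w) + cauchy (\<lambda>x. A (a#x)) B w"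
  unfolding cauchy_def length_Cons sum.atMost_Suc_shift by simp

lemma cauchy_add_left: "cauchy (\<lambda>x. A x + A' x) B w = cauchy A B w + cauchy A' B w"
  unfolding cauchy_def by (simp add: distrib_right sum.distrib)

lemma cauchy_add_right: "cauchy A (\<lambda>x. B x + B' x) w = cauchy A B w + cauchy A B' w"
  unfolding cauchy_def by (simp add: distrib_left sum.distrib)

lemma cauchy_smult_left: "cauchy (\<lambda>x. c * A x) B w = c * cauchy A B w"
  unfolding cauchy_def by (simp add: sum_distrib_left mult.assoc)

lemma cauchy_smult_right: "cauchy A (\<lambda>x. c * B x) w = c * cauchy A B w"
  unfolding cauchy_def by (simp add: sum_distrib_left mult.left_commute)

lemma cauchy_sum_left: "cauchy (\<lambda>x. \<Sum>i\<in>I. f i x) B w = (\<Sum>i\<in>I. cauchy (f i) B w)"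
  unfolding cauchy_def by (simp add: sum_distrib_right) (rule sum.swap)

lemma cauchy_sum_right: "cauchy A (\<lambda>x. \<Sum>i\<in>I. f i x) w = (\<Sum>i\<in>I. cauchy A (f i) w)"
  unfolding cauchy_def by (simp add: sum_distrib_left) (rule sum.swap)

lemma cauchy_zero_left: "cauchy (\<lambda>x. 0) B w = 0"
  unfolding cauchy_def by simp

lemma cauchy_zero_right: "cauchy A (\<lambda>x. 0) w = 0"
  unfolding cauchy_def by simp

lemma cauchy_assoc: "cauchy (cauchy A B) C w = cauchy A (cauchy B C) w"
proof (induction w arbitrary: A B)
  case Nil
  then show ?case by (simp add: cauchy_nil mult.assoc)
next
  case (Cons a w)
  have d: "(\<lambda>x. cauchy A B (a#x)) = (\<lambda>x. A [] * B (a#x) + cauchy (\<lambda>x. A (a#x)) B x)"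
    by (simp add: cauchy_Cons)
  have "cauchy (cauchy A B) C (a#w) = cauchy A B [] * C (a#w) + cauchy (\<lambda>x. cauchy A B (a#x)) C w"
    by (rule cauchy_Cons)
  also have "cauchy (\<lambda>x. cauchy A B (a#x)) C w
      = A [] * cauchy (\<lambda>x. B (a#x)) C w + cauchy (cauchy (\<lambda>x. A (a#x)) B) C w"
    unfolding d cauchy_add_left cauchy_smult_left ..
  also have "cauchy (cauchy (\<lambda>x. A (a#x)) B) C w = cauchy (\<lambda>x. A (a#x)) (cauchy B C) w"
    by (rule Cons.IH)
  finally show ?case
    by (simp add: cauchy_Cons cauchy_nil distrib_left add.assoc mult.assoc)
qed

lemma cauchy_unit_left: "cauchy (char_series []) A w = A w"
proof (cases w)
  case Nil then show ?thesis by (simp add: cauchy_nil char_series_def)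
next
  case (Cons a v)
  have "cauchy (\<lambda>x. char_series [] (a # x)) A v = 0"
    unfolding char_series_def by (simp add: cauchy_zero_left)
  then show ?thesis unfolding Cons cauchy_Cons by (simp add: char_series_def)
qed

lemma cauchy_unit_right: "cauchy A (char_series []) w = A w"
proof -
  have "cauchy A (char_series []) w = (\<Sum>i\<le>length w. if i = length w then A w else 0)"
    unfolding cauchy_def char_series_def by (intro sum.cong refl) auto
  then show ?thesis by simp
qed

lemma cauchy_char_Cons: "cauchy (char_series [b]) A (a#w) = (if a = b then A w else 0)"
proof (cases "a = b")
  case True
  then have e: "(\<lambda>x. char_series [b] (a # x)) = char_series []" by (auto simp: char_series_def)
  show ?thesis unfolding cauchy_Cons e cauchy_unit_left using True by (simp add: char_series_def)
next
  case False
  then have "(\<lambda>x. char_series [b] (a # x)) = (\<lambda>x. 0)" by (auto simp: char_series_def)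
  then show ?thesis unfolding cauchy_Cons using False by (simp add: char_series_def cauchy_zero_left)
qed

lemma cauchy_local_right:
  assumes "A [] = 0" "\<And>v. length v < length w \<Longrightarrow> B v = B' v"
  shows "cauchy A B w = cauchy A B' w"
  unfolding cauchy_def
proof (rule sum.cong[OF refl])
  fix i assume "i \<in> {..length w}"
  then show "A (take i w) * B (drop i w) = A (take i w) * B' (drop i w)"
  proof (cases i)
    case 0 then show ?thesis using assms(1) by simp
  next
    case (Suc k)
    with \<open>i \<in> {..length w}\<close> have "length (drop i w) < length w" by auto
    then show ?thesis using assms(2) by simp
  qed
qed

lemma cauchy_local_left:
  assumes "B [] = 0" "\<And>v. length v < length w \<Longrightarrow> A v = A' v"
  shows "cauchy A B w = cauchy A' B w"
  unfolding cauchy_def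
proof (rule sum.cong[OF refl])
  fix i assume i: "i \<in> {..length w}"
  show "A (take i w) * B (drop i w) = A' (take i w) * B (drop i w)"
  proof (cases "i < length w")
    case True then show ?thesis using assms(2)[of "take i w"] by simp
  next
    case False then have "drop i w = []" by simp
    then show ?thesis using assms(1) by simp
  qed
qed

lemma cauchy_qr: "A [] = 0 \<Longrightarrow> cauchy A B [] = 0" "B [] = 0 \<Longrightarrow> cauchy A B [] = 0"
  by (simp_all add: cauchy_nil)


locale alg =
  fixes V :: "nat set" and P :: "nat \<Rightarrow> ('a + nat) list \<Rightarrow> 'k::comm_semiring_1"
    and S :: "nat \<Rightarrow> 'a list \<Rightarrow> 'k"
  assumes sys: "alg_system V P" and prp: "proper_system V P"
    and sol: "is_solution V P S" and qr: "\<forall>X\<in>V. S X [] = 0"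
begin

definition "supp X = {u. P X u \<noteq> 0}"
definition "LV X = {u\<in>supp X. u \<noteq> [] \<and> (\<exists>Y. hd u = Inr Y)}"
definition "LT X = {u\<in>supp X. u \<noteq> [] \<and> (\<exists>a. hd u = Inl a)}"
definition "LRs Y = {(Z,u). Z\<in>V \<and> u\<in>supp Z \<and> u \<noteq> [] \<and> hd u = Inr Y}"
definition "hv u = (case hd u of Inr Y \<Rightarrow> Y | Inl _ \<Rightarrow> 0)"
abbreviation sw where "sw u \<equiv> subst_word S u"
definition "dl Z X = (\<lambda>v. if Z = X then char_series [] v else 0)"
definition "Cc C Z X = (\<lambda>v. dl Z X v + C Z X v)"
definition "CPstep C Y X w = (\<Sum>(Z,u)\<in>LRs Y. P Z u * cauchy (sw (tl u)) (Cc C Z X) w)"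

fun cpi :: "nat \<Rightarrow> nat \<Rightarrow> nat \<Rightarrow> 'a list \<Rightarrow> 'k" where
  "cpi 0 = (\<lambda>Y X w. 0)"
| "cpi (Suc n) = CPstep (cpi n)"

definition "CP Y X w = cpi (Suc (length w)) Y X w"

lemma fin_supp: "X \<in> V \<Longrightarrow> finite (supp X)"
  using sys unfolding alg_system_def supp_def by blast

lemma supp_vars: "X \<in> V \<Longrightarrow> u \<in> supp X \<Longrightarrow> Inr Y \<in> set u \<Longrightarrow> Y \<in> V"
  using sys unfolding alg_system_def supp_def by blast

lemma supp_ne: "X \<in> V \<Longrightarrow> u \<in> supp X \<Longrightarrow> u \<noteq> []"
  using prp unfolding proper_system_def supp_def by auto

lemma fin_LRs: "finite (LRs Y)"
proof -
  have "LRs Y \<subseteq> Sigma V supp" unfolding LRs_def by auto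
  moreover have "finite (Sigma V supp)" using sys fin_supp unfolding alg_system_def by auto
  ultimately show ?thesis by (rule finite_subset)
qed

lemma fin_LV: "X \<in> V \<Longrightarrow> finite (LV X)" and fin_LT: "X \<in> V \<Longrightarrow> finite (LT X)"
  using fin_supp unfolding LV_def LT_def by auto

lemma sw_qr: "(\<And>Y. Inr Y \<in> set u \<Longrightarrow> Y \<in> V) \<Longrightarrow> u \<noteq> [] \<Longrightarrow> sw u [] = 0"
proof (cases u)
  case (Cons x t)
  assume H: "\<And>Y. Inr Y \<in> set u \<Longrightarrow> Y \<in> V"
  show ?thesis
  proof (cases x)
    case (Inl a) then show ?thesis using Cons by (simp add: cauchy_nil char_series_def)
  next
    case (Inr Y) then have "Y \<in> V" using H Cons by auto
    then show ?thesis using Inr Cons qr by (simp add: cauchy_nil)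
  qed
qed simp

lemma LRs_tl:
  assumes "(Z,u) \<in> LRs Y"
  shows "u = Inr Y # tl u" "tl u \<noteq> []" "Y \<in> V" "Z \<in> V" "\<And>W. Inr W \<in> set (tl u) \<Longrightarrow> W \<in> V" "sw (tl u) [] = 0"
proof -
  from assms have Z: "Z \<in> V" "u \<in> supp Z" "u \<noteq> []" "hd u = Inr Y" unfolding LRs_def by auto
  show u: "u = Inr Y # tl u" using Z by (cases u) auto
  have "Inr Y \<in> set u" by (subst u) simp
  then show Y: "Y \<in> V" by (rule supp_vars[OF Z(1,2)])
  show "Z \<in> V" by (rule Z(1))
  show tl: "tl u \<noteq> []"
  proof
    assume "tl u = []"
    then have "u = [Inr Y]" using u by simp
    moreover have "P Z [Inr Y] = 0" using prp Z(1) Y unfolding proper_system_def by blast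
    ultimately show False using Z(2) unfolding supp_def by simp
  qed
  have "set (tl u) \<subseteq> set u" by (cases u) auto
  then show W: "\<And>W. Inr W \<in> set (tl u) \<Longrightarrow> W \<in> V" using supp_vars[OF Z(1,2)] by blast
  show "sw (tl u) [] = 0" by (rule sw_qr[OF W tl])
qed

lemma CPstep_local:
  assumes "\<And>Z v. length v < length w \<Longrightarrow> C Z X v = C' Z X v"
  shows "CPstep C Y X w = CPstep C' Y X w"
  unfolding CPstep_def
proof (rule sum.cong[OF refl], clarify)
  fix Z u assume zu: "(Z,u) \<in> LRs Y"
  have "cauchy (sw (tl u)) (Cc C Z X) w = cauchy (sw (tl u)) (Cc C' Z X) w"
    by (rule cauchy_local_right, rule LRs_tl(6)[OF zu]) (simp add: Cc_def assms)
  then show "P Z u * cauchy (sw (tl u)) (Cc C Z X) w = P Z u * cauchy (sw (tl u)) (Cc C' Z X) w" by simp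
qed

lemma cpi_stable: "length w < n \<Longrightarrow> length w < m \<Longrightarrow> cpi n Y X w = cpi m Y X w"
proof (induction n arbitrary: m Y X w)
  case 0 then show ?case by simp
next
  case (Suc n)
  then obtain m' where m: "m = Suc m'" by (cases m) auto
  have "cpi n Z X v = cpi m' Z X v" if "length v < length w" for Z v
    using Suc.IH[of v m' Z X] Suc.prems m that by simp
  then show ?case unfolding m cpi.simps by (rule CPstep_local)
qed

lemma CP_eq: "CP Y X w = CPstep CP Y X w"
proof -
  have "CP Y X w = CPstep (cpi (length w)) Y X w" unfolding CP_def by simp
  also have "\<dots> = CPstep CP Y X w"
  proof (rule CPstep_local)
    fix Z and v :: "'a list" assume "length v < length w"
    then have "cpi (length w) Z X v = cpi (Suc (length v)) Z X v" by (intro cpi_stable) auto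
    then show "cpi (length w) Z X v = CP Z X v" unfolding CP_def by (simp del: cpi.simps)
  qed
  finally show ?thesis .
qed

lemma CP_fun: "CP Y X = CPstep CP Y X"
  using CP_eq by blast

lemma CP_qr: "CP Y X [] = 0"
  unfolding CP_eq[of Y X "[]"] CPstep_def
proof (intro sum.neutral ballI, clarify)
  fix Z u assume "(Z,u) \<in> LRs Y"
  then show "P Z u * cauchy (sw (tl u)) (Cc CP Z X) [] = 0" by (simp add: cauchy_nil LRs_tl(6))
qed


lemma dl_left: "cauchy (dl Z Y) B w = (if Z = Y then B w else 0)"
  unfolding dl_def by (cases "Z = Y") (simp_all add: cauchy_unit_left cauchy_zero_left)

lemma dl_right: "cauchy A (dl Z Y) w = (if Z = Y then A w else 0)"
  unfolding dl_def by (cases "Z = Y") (simp_all add: cauchy_unit_right cauchy_zero_right)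

lemma LV_LRs:
  assumes "X \<in> V" "u \<in> LV X"
  shows "(X, u) \<in> LRs (hv u)"
  using assms unfolding LV_def LRs_def hv_def by auto

lemma hv_iff: "((\<exists>Y. hd u = Inr Y) \<and> V0 = hv u) \<longleftrightarrow> hd u = Inr V0"
  by (cases "hd u") (auto simp: hv_def)

lemma CP_abs: "CP V0 Y = (\<lambda>v. \<Sum>(Z,u)\<in>LRs V0. P Z u * cauchy (sw (tl u)) (Cc CP Z Y) v)"
  by (rule ext) (subst CP_eq, simp add: CPstep_def)

lemma first_parts:
  assumes X: "X \<in> V"
  shows "(\<Sum>(Z,u)\<in>LRs V0. P Z u * (if Z = X then g u else 0))
       = (\<Sum>u\<in>LV X. P X u * (if V0 = hv u then g u else 0))"
proof -
  have "(\<Sum>(Z,u)\<in>LRs V0. P Z u * (if Z = X then g u else 0))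
      = (\<Sum>p\<in>LRs V0. if fst p = X then P X (snd p) * g (snd p) else 0)"
    by (intro sum.cong refl) auto
  also have "\<dots> = (\<Sum>p\<in>{p\<in>LRs V0. fst p = X}. P X (snd p) * g (snd p))"
    by (rule sum.inter_filter[symmetric, OF fin_LRs])
  also have "{p\<in>LRs V0. fst p = X} = (\<lambda>u. (X,u)) ` {u\<in>LV X. V0 = hv u}"
  proof (intro set_eqI iffI)
    fix p assume "p \<in> {p\<in>LRs V0. fst p = X}"
    then show "p \<in> (\<lambda>u. (X,u)) ` {u\<in>LV X. V0 = hv u}"
      unfolding LRs_def LV_def using hv_iff by (auto simp: image_iff hv_def)
  next
    fix p assume "p \<in> (\<lambda>u. (X,u)) ` {u\<in>LV X. V0 = hv u}"
    then show "p \<in> {p\<in>LRs V0. fst p = X}"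
      unfolding LRs_def LV_def using hv_iff X by auto
  qed
  also have "(\<Sum>p\<in>(\<lambda>u. (X,u)) ` {u\<in>LV X. V0 = hv u}. P X (snd p) * g (snd p))
      = (\<Sum>u\<in>{u\<in>LV X. V0 = hv u}. P X u * g u)"
    by (subst sum.reindex) (auto simp: inj_on_def)
  also have "\<dots> = (\<Sum>u\<in>LV X. if V0 = hv u then P X u * g u else 0)"
    by (rule sum.inter_filter[OF fin_LV[OF X]])
  also have "\<dots> = (\<Sum>u\<in>LV X. P X u * (if V0 = hv u then g u else 0))"
    by (intro sum.cong refl) auto
  finally show ?thesis .
qed

lemma D_lemma:
  assumes "X \<in> V"
  shows "CP V0 X w = (\<Sum>u\<in>LV X. P X u * cauchy (Cc CP V0 (hv u)) (sw (tl u)) w)"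
  using assms
proof (induction "length w" arbitrary: w V0 X rule: less_induct)
  case less
  note X = less.prems
  define DR where "DR = (\<lambda>Z X v. \<Sum>u'\<in>LV X. P X u' * cauchy (Cc CP Z (hv u')) (sw (tl u')) v)"
  define T2 where "T2 = (\<lambda>Z u u'. cauchy (sw (tl u)) (cauchy (Cc CP Z (hv u')) (sw (tl u'))) w)"
  have IH: "CP Z X v = DR Z X v" if "length v < length w" for Z v
    unfolding DR_def by (rule less.hyps[OF that X])
  have L1: "cauchy (sw (tl u)) (Cc CP Z X) w
      = (if Z = X then sw (tl u) w else 0) + (\<Sum>u'\<in>LV X. P X u' * T2 Z u u')"
    if zu: "(Z,u) \<in> LRs V0" for Z u
  proof -
    have "cauchy (sw (tl u)) (Cc CP Z X) w = cauchy (sw (tl u)) (dl Z X) w + cauchy (sw (tl u)) (CP Z X) w"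
      unfolding Cc_def by (rule cauchy_add_right)
    also have "cauchy (sw (tl u)) (CP Z X) w = cauchy (sw (tl u)) (DR Z X) w"
      by (rule cauchy_local_right, rule LRs_tl(6)[OF zu], rule IH)
    also have "\<dots> = (\<Sum>u'\<in>LV X. P X u' * T2 Z u u')"
      unfolding DR_def T2_def cauchy_sum_right cauchy_smult_right ..
    finally show ?thesis by (simp add: dl_right)
  qed
  have R1: "cauchy (Cc CP V0 (hv u')) (sw (tl u')) w
      = (if V0 = hv u' then sw (tl u') w else 0) + (\<Sum>(Z,u)\<in>LRs V0. P Z u * T2 Z u u')" for u'
  proof -
    have "cauchy (Cc CP V0 (hv u')) (sw (tl u')) w
       = cauchy (dl V0 (hv u')) (sw (tl u')) w + cauchy (CP V0 (hv u')) (sw (tl u')) w"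
      unfolding Cc_def by (rule cauchy_add_left)
    also have "cauchy (CP V0 (hv u')) (sw (tl u')) w
       = cauchy (\<lambda>v. \<Sum>(Z,u)\<in>LRs V0. P Z u * cauchy (sw (tl u)) (Cc CP Z (hv u')) v) (sw (tl u')) w"
      by (subst CP_abs) simp
    also have "\<dots> = (\<Sum>(Z,u)\<in>LRs V0. P Z u * T2 Z u u')"
      unfolding T2_def cauchy_sum_left
      by (intro sum.cong refl) (auto simp: cauchy_smult_left cauchy_assoc)
    finally show ?thesis by (simp add: dl_left)
  qed
  have "CP V0 X w = (\<Sum>(Z,u)\<in>LRs V0. P Z u * cauchy (sw (tl u)) (Cc CP Z X) w)"
    by (subst CP_eq) (simp add: CPstep_def)
  also have "\<dots> = (\<Sum>(Z,u)\<in>LRs V0. P Z u * (if Z = X then sw (tl u) w else 0))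
      + (\<Sum>(Z,u)\<in>LRs V0. \<Sum>u'\<in>LV X. P Z u * P X u' * T2 Z u u')"
    by (simp add: L1 distrib_left sum.distrib sum_distrib_left mult.assoc case_prod_beta cong: sum.cong)
  also have "(\<Sum>(Z,u)\<in>LRs V0. P Z u * (if Z = X then sw (tl u) w else 0))
      = (\<Sum>u\<in>LV X. P X u * (if V0 = hv u then sw (tl u) w else 0))"
    by (rule first_parts[OF X])
  also have "(\<Sum>(Z,u)\<in>LRs V0. \<Sum>u'\<in>LV X. P Z u * P X u' * T2 Z u u')
      = (\<Sum>u'\<in>LV X. \<Sum>(Z,u)\<in>LRs V0. P Z u * P X u' * T2 Z u u')"
    unfolding split_def by (rule sum.swap)
  also have "(\<Sum>u\<in>LV X. P X u * (if V0 = hv u then sw (tl u) w else 0))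
      + (\<Sum>u'\<in>LV X. \<Sum>(Z,u)\<in>LRs V0. P Z u * P X u' * T2 Z u u')
      = (\<Sum>u'\<in>LV X. P X u' * cauchy (Cc CP V0 (hv u')) (sw (tl u')) w)"
    unfolding R1 distrib_left sum.distrib sum_distrib_left
    by (simp add: case_prod_beta mult.assoc mult.left_commute)
  finally show ?case .
qed


definition "A Y w = (\<Sum>u\<in>LT Y. P Y u * sw u w)"
definition "T X w = (\<Sum>Y\<in>V. cauchy (A Y) (Cc CP Y X) w)"

lemma finV: "finite V" using sys unfolding alg_system_def by blast

lemma LV_facts:
  assumes "X \<in> V" "u \<in> LV X"
  shows "u = Inr (hv u) # tl u" "hv u \<in> V" "sw (tl u) [] = 0"
  using LRs_tl[OF LV_LRs[OF assms]] by auto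

lemma sys_eq:
  assumes X: "X \<in> V"
  shows "S X w = A X w + (\<Sum>u\<in>LV X. P X u * cauchy (S (hv u)) (sw (tl u)) w)"
proof -
  have "S X w = (\<Sum>u\<in>supp X. P X u * sw u w)"
    using sol X unfolding is_solution_def supp_def by (metis (no_types, lifting))
  also have "supp X = LT X \<union> LV X"
  proof (intro set_eqI iffI)
    fix u assume u: "u \<in> supp X"
    then have "u \<noteq> []" using supp_ne[OF X] by blast
    then show "u \<in> LT X \<union> LV X" using u unfolding LT_def LV_def by (cases "hd u") auto
  qed (auto simp: LT_def LV_def)
  also have "(\<Sum>u\<in>LT X \<union> LV X. P X u * sw u w) = A X w + (\<Sum>u\<in>LV X. P X u * sw u w)"
    unfolding A_def by (rule sum.union_disjoint) (use fin_LT[OF X] fin_LV[OF X] in \<open>auto simp: LT_def LV_def\<close>)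
  also have "(\<Sum>u\<in>LV X. P X u * sw u w) = (\<Sum>u\<in>LV X. P X u * cauchy (S (hv u)) (sw (tl u)) w)"
  proof (rule sum.cong[OF refl])
    fix u assume "u \<in> LV X"
    note F = LV_facts[OF X this]
    have "sw u w = sw (Inr (hv u) # tl u) w" using F(1) by metis
    then show "P X u * sw u w = P X u * cauchy (S (hv u)) (sw (tl u)) w" by simp
  qed
  finally show ?thesis .
qed

lemma A_qr: "Y \<in> V \<Longrightarrow> A Y [] = 0"
  unfolding A_def
proof (intro sum.neutral ballI)
  fix u assume Y: "Y \<in> V" and u: "u \<in> LT Y"
  then have "sw u [] = 0" using supp_vars[OF Y] sw_qr unfolding LT_def by auto
  then show "P Y u * sw u [] = 0" by simp
qed

lemma LC:
  assumes "X \<in> V"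
  shows "S X w = T X w"
  using assms
proof (induction "length w" arbitrary: w X rule: less_induct)
  case less
  note X = less.prems
  have "S X w = A X w + (\<Sum>u\<in>LV X. P X u * cauchy (S (hv u)) (sw (tl u)) w)"
    by (rule sys_eq[OF X])
  also have "(\<Sum>u\<in>LV X. P X u * cauchy (S (hv u)) (sw (tl u)) w)
      = (\<Sum>u\<in>LV X. P X u * cauchy (T (hv u)) (sw (tl u)) w)"
  proof (rule sum.cong[OF refl])
    fix u assume "u \<in> LV X"
    note F = LV_facts[OF X this]
    have "cauchy (S (hv u)) (sw (tl u)) w = cauchy (T (hv u)) (sw (tl u)) w"
      by (rule cauchy_local_left, rule F(3), rule less.hyps[OF _ F(2)])
    then show "P X u * cauchy (S (hv u)) (sw (tl u)) w = P X u * cauchy (T (hv u)) (sw (tl u)) w" by simp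
  qed
  also have "A X w + (\<Sum>u\<in>LV X. P X u * cauchy (T (hv u)) (sw (tl u)) w) = T X w"
  proof -
    have "T X w = (\<Sum>Y\<in>V. cauchy (A Y) (dl Y X) w) + (\<Sum>Y\<in>V. cauchy (A Y) (CP Y X) w)"
      unfolding T_def Cc_def cauchy_add_right sum.distrib ..
    also have "(\<Sum>Y\<in>V. cauchy (A Y) (dl Y X) w) = A X w"
      unfolding dl_right using X finV by (simp add: sum.delta')
    also have "(\<Sum>Y\<in>V. cauchy (A Y) (CP Y X) w)
        = (\<Sum>Y\<in>V. \<Sum>u\<in>LV X. P X u * cauchy (cauchy (A Y) (Cc CP Y (hv u))) (sw (tl u)) w)"
    proof (rule sum.cong[OF refl])
      fix Y assume "Y \<in> V"
      have "CP Y X = (\<lambda>v. \<Sum>u\<in>LV X. P X u * cauchy (Cc CP Y (hv u)) (sw (tl u)) v)"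
        by (rule ext) (rule D_lemma[OF X])
      then show "cauchy (A Y) (CP Y X) w = (\<Sum>u\<in>LV X. P X u * cauchy (cauchy (A Y) (Cc CP Y (hv u))) (sw (tl u)) w)"
        by (simp add: cauchy_sum_right cauchy_smult_right cauchy_assoc)
    qed
    also have "\<dots> = (\<Sum>u\<in>LV X. P X u * cauchy (T (hv u)) (sw (tl u)) w)"
      unfolding T_def cauchy_sum_left
      by (subst sum.swap) (simp add: sum_distrib_left)
    finally show ?thesis by simp
  qed
  finally show ?case .
qed

end


datatype 'b item = Tm 'b | Vr nat | Cp nat nat

fun toI :: "'b + nat \<Rightarrow> 'b item" where
  "toI (Inl a) = Tm a" | "toI (Inr X) = Vr X"

locale algf = alg V P S for V and P :: "nat \<Rightarrow> ('a::finite + nat) list \<Rightarrow> 'k::comm_semiring_1" and S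
begin

fun itemser :: "'a item \<Rightarrow> 'a list \<Rightarrow> 'k" where
  "itemser (Tm b) = char_series [b]"
| "itemser (Vr X) = S X"
| "itemser (Cp Y X) = CP Y X"

definition Val :: "'a item list \<Rightarrow> 'a list \<Rightarrow> 'k" where
  "Val g = foldr (\<lambda>h acc. cauchy (itemser h) acc) g (char_series [])"

lemma Val_nil: "Val [] = char_series []" unfolding Val_def by simp
lemma Val_Cons: "Val (h # g) = cauchy (itemser h) (Val g)" unfolding Val_def by simp

lemma Val_append: "Val (g1 @ g2) = cauchy (Val g1) (Val g2)"
proof (induction g1)
  case Nil then show ?case by (simp add: Val_nil cauchy_unit_left fun_eq_iff)
next
  case (Cons h g1)
  show ?case unfolding append_Cons Val_Cons Cons.IH by (rule ext) (simp add: cauchy_assoc)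
qed

lemma Val_toI: "Val (map toI u) = sw u"
proof (induction u)
  case Nil then show ?case by (simp add: Val_nil)
next
  case (Cons c u)
  then show ?case by (cases c) (simp_all add: Val_Cons)
qed

definition Iset :: "'a item set" where "Iset = range Tm \<union> Vr ` V \<union> (\<lambda>(Y,X). Cp Y X) ` (V \<times> V)"

lemma finite_Iset: "finite Iset"
proof -
  have "finite (range (Tm :: 'a \<Rightarrow> 'a item))" by (rule finite_imageI) simp
  then show ?thesis unfolding Iset_def using finV by auto
qed

lemma itemser_qr: "h \<in> Iset \<Longrightarrow> itemser h [] = 0"
  unfolding Iset_def using qr by (auto simp: char_series_def CP_qr)

lemma Val_at_nil: "set g \<subseteq> Iset \<Longrightarrow> Val g [] = (if g = [] then 1 else 0)"
  by (cases g) (auto simp: Val_nil Val_Cons cauchy_nil char_series_def itemser_qr)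

definition "Lmax = Max (insert 0 (length ` (\<Union>X\<in>V. supp X)))"
definition "M = 2 * Lmax + 1"
definition G :: "'a item list set" where "G = {g. set g \<subseteq> Iset \<and> length g \<le> M}"

lemma finite_G: "finite G"
  unfolding G_def using finite_lists_length_le[OF finite_Iset, of M] by simp

lemma rule_len: "X \<in> V \<Longrightarrow> u \<in> supp X \<Longrightarrow> length u \<le> Lmax"
  unfolding Lmax_def by (rule Max_ge) (use finV fin_supp in auto)

lemma toI_set: "X \<in> V \<Longrightarrow> u \<in> supp X \<Longrightarrow> set (map toI u) \<subseteq> Iset"
proof -
  assume X: "X \<in> V" "u \<in> supp X"
  { fix c assume c: "c \<in> set u"
    have "toI c \<in> Iset"
    proof (cases c)
      case (Inl a) then show ?thesis by (simp add: Iset_def)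
    next
      case (Inr Y) then have "Y \<in> V" using supp_vars[OF X] c by simp
      then show ?thesis using Inr by (simp add: Iset_def)
    qed }
  then show ?thesis by auto
qed


definition LTa :: "'a \<Rightarrow> (nat \<times> ('a + nat) list) set" where
  "LTa a = {(Y,u). Y\<in>V \<and> u\<in>supp Y \<and> u \<noteq> [] \<and> hd u = Inl a}"

lemma fin_LTa: "finite (LTa a)"
proof -
  have "LTa a \<subseteq> Sigma V supp" unfolding LTa_def by auto
  moreover have "finite (Sigma V supp)" using finV fin_supp by auto
  ultimately show ?thesis by (rule finite_subset)
qed

definition stepV :: "nat \<Rightarrow> 'a \<Rightarrow> 'a item list \<Rightarrow> 'k" where
  "stepV X a g = (\<Sum>(Y,u)\<in>LTa a. P Y u * ((if g = map toI (tl u) @ [Cp Y X] then 1 else 0)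
       + (if Y = X \<and> g = map toI (tl u) then 1 else 0)))"

fun step0 :: "'a + nat \<Rightarrow> 'a \<Rightarrow> 'a item list \<Rightarrow> 'k" where
  "step0 (Inl b) a g = (if a = b \<and> g = [] then 1 else 0)"
| "step0 (Inr W) a g = stepV W a g"

definition stepC :: "nat \<Rightarrow> nat \<Rightarrow> 'a \<Rightarrow> 'a item list \<Rightarrow> 'k" where
  "stepC Y X a g = (\<Sum>(Z,u)\<in>LRs Y. P Z u * (\<Sum>g'\<in>G. step0 (hd (tl u)) a g' *
      ((if g = g' @ map toI (tl (tl u)) @ [Cp Z X] then 1 else 0)
       + (if Z = X \<and> g = g' @ map toI (tl (tl u)) then 1 else 0))))"

fun stepw :: "'a item \<Rightarrow> 'a \<Rightarrow> 'a item list \<Rightarrow> 'k" where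
  "stepw (Tm b) = step0 (Inl b)"
| "stepw (Vr X) = stepV X"
| "stepw (Cp Y X) = stepC Y X"

lemma sum_LTa:
  "(\<Sum>Y\<in>V. \<Sum>u\<in>LT Y. (if hd u = Inl a then f Y u else 0)) = (\<Sum>(Y,u)\<in>LTa a. f Y u)"
proof -
  have fS: "finite (Sigma V LT)" using finV fin_LT by auto
  have "(\<Sum>Y\<in>V. \<Sum>u\<in>LT Y. (if hd u = Inl a then f Y u else 0))
      = (\<Sum>p\<in>Sigma V LT. if hd (snd p) = Inl a then f (fst p) (snd p) else 0)"
    by (subst sum.Sigma) (use finV fin_LT in \<open>auto simp: split_def\<close>)
  also have "\<dots> = (\<Sum>p\<in>{p\<in>Sigma V LT. hd (snd p) = Inl a}. f (fst p) (snd p))"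
    by (rule sum.inter_filter[symmetric, OF fS])
  also have "{p\<in>Sigma V LT. hd (snd p) = Inl a} = LTa a"
    unfolding LTa_def LT_def by auto
  finally show ?thesis by (simp add: split_def)
qed

lemma Val_Cp: "Val [Cp Y X] = CP Y X"
  by (rule ext) (simp add: Val_Cons Val_nil cauchy_unit_right)

lemma Cc_split:
  "cauchy (sw t) (Cc CP Y X) x = (if Y = X then Val (map toI t) x else 0) + Val (map toI t @ [Cp Y X]) x"
  unfolding Cc_def cauchy_add_right dl_right Val_append Val_toI Val_Cp by simp

lemma collapse:
  assumes "g0 \<in> G"
  shows "(\<Sum>g\<in>G. (if g = g0 then 1 else 0) * Val g x) = Val g0 x"
proof -
  have "(\<Sum>g\<in>G. (if g = g0 then 1 else 0) * Val g x) = (\<Sum>g\<in>G. if g = g0 then Val g x else 0)"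
    by (intro sum.cong) auto
  then show ?thesis using assms finite_G by (simp add: sum.delta)
qed

lemma LTa_facts:
  assumes "(Y,u) \<in> LTa a" "X \<in> V"
  shows "map toI (tl u) @ [Cp Y X] \<in> G" "map toI (tl u) \<in> G" "u = Inl a # tl u" "Y \<in> V"
    "length (map toI (tl u) @ [Cp Y X]) \<le> Lmax" "set (map toI (tl u) @ [Cp Y X]) \<subseteq> Iset"
proof -
  have Y: "Y \<in> V" "u \<in> supp Y" "u \<noteq> []" "hd u = Inl a" using assms(1) unfolding LTa_def by auto
  show "Y \<in> V" by (rule Y(1))
  show u: "u = Inl a # tl u" using Y by (cases u) auto
  have l: "length u \<le> Lmax" by (rule rule_len[OF Y(1,2)])
  have s: "set (map toI (tl u)) \<subseteq> Iset" using toI_set[OF Y(1,2)] by (cases u) auto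
  have c: "Cp Y X \<in> Iset" using Y(1) assms(2) unfolding Iset_def by auto
  show "map toI (tl u) @ [Cp Y X] \<in> G" using l s c Y(3) unfolding G_def M_def by (cases u) auto
  show "map toI (tl u) \<in> G" using l s unfolding G_def M_def by (cases u) auto
  show "length (map toI (tl u) @ [Cp Y X]) \<le> Lmax" using l Y(3) by (cases u) auto
  show "set (map toI (tl u) @ [Cp Y X]) \<subseteq> Iset" using s c by auto
qed

lemma head_V:
  assumes X: "X \<in> V"
  shows "S X (a#x) = (\<Sum>g\<in>G. stepV X a g * Val g x)"
proof -
  define E where "E = (\<lambda>Y u. (if Y = X then Val (map toI (tl u)) x else 0) + Val (map toI (tl u) @ [Cp Y X]) x)"
  have dA: "(\<lambda>x'. A Y (a#x')) = (\<lambda>x'. \<Sum>u\<in>LT Y. P Y u * (if hd u = Inl a then 1 else 0) * sw (tl u) x')"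
    if Y: "Y \<in> V" for Y
  proof (rule ext)
    fix x'
    show "A Y (a#x') = (\<Sum>u\<in>LT Y. P Y u * (if hd u = Inl a then 1 else 0) * sw (tl u) x')"
      unfolding A_def
    proof (rule sum.cong[OF refl])
      fix u assume "u \<in> LT Y"
      then obtain c where u: "u = Inl c # tl u" unfolding LT_def by (cases u) auto
      have "sw u (a#x') = sw (Inl c # tl u) (a#x')" using u by metis
      also have "\<dots> = (if a = c then sw (tl u) x' else 0)" by (simp add: cauchy_char_Cons)
      finally have swe: "sw u (a#x') = (if a = c then sw (tl u) x' else 0)" .
      then show "P Y u * sw u (a # x') = P Y u * (if hd u = Inl a then 1 else 0) * sw (tl u) x'"
      proof (cases "c = a")
        case True
        then have "hd u = Inl a" using u by (metis list.sel(1))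
        then show ?thesis using swe True by simp
      next
        case False
        then have "hd u \<noteq> Inl a" using u by (metis list.sel(1) sum.inject(1))
        then show ?thesis using swe False by simp
      qed
    qed
  qed
  have "S X (a#x) = T X (a#x)" by (rule LC[OF X])
  also have "\<dots> = (\<Sum>Y\<in>V. cauchy (\<lambda>x'. A Y (a#x')) (Cc CP Y X) x)"
    unfolding T_def by (intro sum.cong refl) (simp add: cauchy_Cons A_qr)
  also have "\<dots> = (\<Sum>Y\<in>V. \<Sum>u\<in>LT Y. (if hd u = Inl a then P Y u * E Y u else 0))"
  proof (rule sum.cong[OF refl])
    fix Y assume Y: "Y \<in> V"
    show "cauchy (\<lambda>x'. A Y (a#x')) (Cc CP Y X) x = (\<Sum>u\<in>LT Y. (if hd u = Inl a then P Y u * E Y u else 0))"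
      unfolding dA[OF Y] cauchy_sum_left
      by (intro sum.cong refl) (simp add: cauchy_smult_left Cc_split E_def)
  qed
  also have "\<dots> = (\<Sum>(Y,u)\<in>LTa a. P Y u * E Y u)" by (rule sum_LTa)
  also have "\<dots> = (\<Sum>g\<in>G. stepV X a g * Val g x)"
  proof -
    have "(\<Sum>g\<in>G. stepV X a g * Val g x)
        = (\<Sum>(Y,u)\<in>LTa a. P Y u * ((\<Sum>g\<in>G. (if g = map toI (tl u) @ [Cp Y X] then 1 else 0) * Val g x)
            + (\<Sum>g\<in>G. (if Y = X \<and> g = map toI (tl u) then 1 else 0) * Val g x)))"
    proof -
      have "(\<Sum>g\<in>G. stepV X a g * Val g x) = (\<Sum>g\<in>G. \<Sum>p\<in>LTa a. P (fst p) (snd p) *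
          ((if g = map toI (tl (snd p)) @ [Cp (fst p) X] then 1 else 0)
         + (if fst p = X \<and> g = map toI (tl (snd p)) then 1 else 0)) * Val g x)"
        unfolding stepV_def sum_distrib_right split_def ..
      also have "\<dots> = (\<Sum>p\<in>LTa a. \<Sum>g\<in>G. P (fst p) (snd p) *
          ((if g = map toI (tl (snd p)) @ [Cp (fst p) X] then 1 else 0)
         + (if fst p = X \<and> g = map toI (tl (snd p)) then 1 else 0)) * Val g x)"
        by (rule sum.swap)
      also have "\<dots> = (\<Sum>p\<in>LTa a. P (fst p) (snd p) * ((\<Sum>g\<in>G. (if g = map toI (tl (snd p)) @ [Cp (fst p) X] then 1 else 0) * Val g x)
            + (\<Sum>g\<in>G. (if fst p = X \<and> g = map toI (tl (snd p)) then 1 else 0) * Val g x)))"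
        by (intro sum.cong refl) (simp add: sum_distrib_left distrib_left distrib_right sum.distrib mult.assoc)
      finally show ?thesis by (simp add: split_def)
    qed
    also have "\<dots> = (\<Sum>(Y,u)\<in>LTa a. P Y u * E Y u)"
    proof (intro sum.cong refl, clarify)
      fix Y u assume yu: "(Y,u) \<in> LTa a"
      have e2: "(\<Sum>g\<in>G. (if Y = X \<and> g = map toI (tl u) then 1 else 0) * Val g x)
          = (if Y = X then Val (map toI (tl u)) x else 0)"
        by (cases "Y = X") (simp_all add: collapse LTa_facts(2)[OF yu X])
      show "P Y u * ((\<Sum>g\<in>G. (if g = map toI (tl u) @ [Cp Y X] then 1 else 0) * Val g x)
            + (\<Sum>g\<in>G. (if Y = X \<and> g = map toI (tl u) then 1 else 0) * Val g x)) = P Y u * E Y u"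
        unfolding e2 E_def collapse[OF LTa_facts(1)[OF yu X]] by (simp add: add.commute)
    qed
    finally show ?thesis by (rule sym)
  qed
  finally show ?thesis .
qed


definition "okc c = (case c of Inr W \<Rightarrow> W \<in> V | Inl _ \<Rightarrow> True)"

lemma head_0:
  assumes "okc c"
  shows "itemser (toI c) (a#x) = (\<Sum>g\<in>G. step0 c a g * Val g x)"
proof (cases c)
  case (Inl b)
  have "[] \<in> G" unfolding G_def by simp
  have "(\<Sum>g\<in>G. step0 c a g * Val g x) = (\<Sum>g\<in>G. if g = [] then (if a = b then Val g x else 0) else 0)"
    by (intro sum.cong) (auto simp: Inl)
  also have "\<dots> = (if a = b then Val [] x else 0)"
    using finite_G \<open>[] \<in> G\<close> by (simp add: sum.delta)
  finally show ?thesis unfolding Inl by (auto simp: char_series_def Val_nil)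
next
  case (Inr W)
  then show ?thesis using assms head_V by (simp add: okc_def)
qed

lemma step0_supp:
  assumes "okc c" "step0 c a g \<noteq> 0"
  shows "length g \<le> Lmax" "set g \<subseteq> Iset"
proof -
  have "length g \<le> Lmax \<and> set g \<subseteq> Iset"
  proof (cases c)
    case (Inl b) then show ?thesis using assms by (auto split: if_splits)
  next
    case (Inr W)
    then have W: "W \<in> V" using assms(1) by (simp add: okc_def)
    from assms(2) Inr have "stepV W a g \<noteq> 0" by simp
    then obtain p where p: "p \<in> LTa a" and nz: "P (fst p) (snd p) * ((if g = map toI (tl (snd p)) @ [Cp (fst p) W] then 1 else 0)
       + (if fst p = W \<and> g = map toI (tl (snd p)) then 1 else 0)) \<noteq> 0"
      unfolding stepV_def split_def by (meson sum.not_neutral_contains_not_neutral)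
    obtain Y u where pe: "p = (Y,u)" by (cases p)
    note F = LTa_facts[OF p[unfolded pe] W]
    have "g = map toI (tl u) @ [Cp Y W] \<or> g = map toI (tl u)" using nz pe by (auto split: if_splits)
    moreover have "set (map toI (tl u)) \<subseteq> Iset" "length (map toI (tl u)) \<le> Lmax" using F(5,6) by auto
    ultimately show ?thesis using F(5,6) by blast
  qed
  then show "length g \<le> Lmax" "set g \<subseteq> Iset" by auto
qed

lemma sw_Cons_item: "okc c \<Longrightarrow> sw (c # t) = cauchy (itemser (toI c)) (sw t)"
  by (cases c) auto

lemma LRs_more:
  assumes "(Z,u) \<in> LRs Y"
  shows "okc (hd (tl u))" "tl u = hd (tl u) # tl (tl u)" "length (tl (tl u)) + 2 \<le> Lmax"
    "set (map toI (tl (tl u))) \<subseteq> Iset" "itemser (toI (hd (tl u))) [] = 0"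
proof -
  note F = LRs_tl[OF assms]
  from assms have Z: "Z \<in> V" "u \<in> supp Z" unfolding LRs_def by auto
  show tl: "tl u = hd (tl u) # tl (tl u)" using F(2) by (cases "tl u") auto
  have sI: "set (map toI u) \<subseteq> Iset" by (rule toI_set[OF Z])
  have "hd (tl u) \<in> set u" using F(1) tl by (metis list.set_intros(1) list.set_intros(2))
  then have hI: "toI (hd (tl u)) \<in> Iset" using sI by auto
  show "okc (hd (tl u))"
  proof (cases "hd (tl u)")
    case (Inr W) then show ?thesis using supp_vars[OF Z] \<open>hd (tl u) \<in> set u\<close> by (simp add: okc_def)
  qed (simp add: okc_def)
  show "length (tl (tl u)) + 2 \<le> Lmax" using rule_len[OF Z] F(1,2) tl
    by (metis add_2_eq_Suc' length_Cons)
  have "set (tl (tl u)) \<subseteq> set u" using F(1) tl by (metis set_subset_Cons subset_trans)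
  then show "set (map toI (tl (tl u))) \<subseteq> Iset" using sI by auto
  show "itemser (toI (hd (tl u))) [] = 0" by (rule itemser_qr[OF hI])
qed

lemma head_C:
  assumes Y: "Y \<in> V" and X: "X \<in> V"
  shows "CP Y X (a#x) = (\<Sum>g\<in>G. stepC Y X a g * Val g x)"
proof -
  define E where "E = (\<lambda>Z u g'. (if Z = X then Val (g' @ map toI (tl (tl u))) x else 0)
      + Val (g' @ map toI (tl (tl u)) @ [Cp Z X]) x)"
  have inner: "cauchy (sw (tl u)) (Cc CP Z X) (a#x) = (\<Sum>g'\<in>G. step0 (hd (tl u)) a g' * E Z u g')"
    if zu: "(Z,u) \<in> LRs Y" for Z u
  proof -
    note F = LRs_more[OF zu]
    let ?c = "hd (tl u)" and ?t = "tl (tl u)"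
    have sw: "sw (tl u) = cauchy (itemser (toI ?c)) (sw ?t)"
      using sw_Cons_item[OF F(1), of ?t] F(2) by metis
    have cc: "cauchy (sw ?t) (Cc CP Z X) = (\<lambda>v. (if Z = X then Val (map toI ?t) v else 0) + Val (map toI ?t @ [Cp Z X]) v)"
      by (rule ext) (rule Cc_split)
    have "cauchy (sw (tl u)) (Cc CP Z X) (a#x) = cauchy (itemser (toI ?c)) (cauchy (sw ?t) (Cc CP Z X)) (a#x)"
      unfolding sw by (rule cauchy_assoc)
    also have "\<dots> = cauchy (\<lambda>x. itemser (toI ?c) (a#x)) (cauchy (sw ?t) (Cc CP Z X)) x"
      by (simp add: cauchy_Cons F(5))
    also have "\<dots> = cauchy (\<lambda>x. \<Sum>g'\<in>G. step0 ?c a g' * Val g' x) (cauchy (sw ?t) (Cc CP Z X)) x"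
      using head_0[OF F(1)] by simp
    also have "\<dots> = (\<Sum>g'\<in>G. step0 ?c a g' * cauchy (Val g') (cauchy (sw ?t) (Cc CP Z X)) x)"
      by (simp add: cauchy_sum_left cauchy_smult_left)
    also have "\<dots> = (\<Sum>g'\<in>G. step0 ?c a g' * E Z u g')"
    proof (rule sum.cong[OF refl])
      fix g' assume "g' \<in> G"
      have "cauchy (Val g') (cauchy (sw ?t) (Cc CP Z X)) x = E Z u g'"
        unfolding cc cauchy_add_right E_def Val_append[symmetric]
        by (cases "Z = X") (simp_all add: cauchy_zero_right Val_append)
      then show "step0 ?c a g' * cauchy (Val g') (cauchy (sw ?t) (Cc CP Z X)) x = step0 ?c a g' * E Z u g'" by simp
    qed
    finally show ?thesis .
  qed
  have "CP Y X (a#x) = (\<Sum>(Z,u)\<in>LRs Y. P Z u * cauchy (sw (tl u)) (Cc CP Z X) (a#x))"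
    by (subst CP_eq) (simp add: CPstep_def)
  also have "\<dots> = (\<Sum>(Z,u)\<in>LRs Y. P Z u * (\<Sum>g'\<in>G. step0 (hd (tl u)) a g' * E Z u g'))"
    by (intro sum.cong refl) (auto simp: inner)
  also have "\<dots> = (\<Sum>g\<in>G. stepC Y X a g * Val g x)"
  proof -
    have "(\<Sum>g\<in>G. stepC Y X a g * Val g x) = (\<Sum>g\<in>G. \<Sum>p\<in>LRs Y. P (fst p) (snd p) * (\<Sum>g'\<in>G. step0 (hd (tl (snd p))) a g' *
      ((if g = g' @ map toI (tl (tl (snd p))) @ [Cp (fst p) X] then 1 else 0)
       + (if fst p = X \<and> g = g' @ map toI (tl (tl (snd p))) then 1 else 0))) * Val g x)"
      unfolding stepC_def sum_distrib_right split_def ..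
    also have "\<dots> = (\<Sum>p\<in>LRs Y. \<Sum>g\<in>G. P (fst p) (snd p) * (\<Sum>g'\<in>G. step0 (hd (tl (snd p))) a g' *
      ((if g = g' @ map toI (tl (tl (snd p))) @ [Cp (fst p) X] then 1 else 0)
       + (if fst p = X \<and> g = g' @ map toI (tl (tl (snd p))) then 1 else 0))) * Val g x)"
      by (rule sum.swap)
    also have "\<dots> = (\<Sum>p\<in>LRs Y. P (fst p) (snd p) * (\<Sum>g'\<in>G. step0 (hd (tl (snd p))) a g' * E (fst p) (snd p) g'))"
    proof (rule sum.cong[OF refl])
      fix p assume p: "p \<in> LRs Y"
      obtain Z u where pe: "p = (Z,u)" by (cases p)
      note F = LRs_more[OF p[unfolded pe]]
      have Z: "Z \<in> V" using p pe unfolding LRs_def by auto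
      let ?c = "hd (tl u)" and ?t = "map toI (tl (tl u))"
      have trm: "(\<Sum>g\<in>G. step0 ?c a g' * ((if g = g' @ ?t @ [Cp Z X] then 1 else 0)
           + (if Z = X \<and> g = g' @ ?t then 1 else 0)) * Val g x) = step0 ?c a g' * E Z u g'" for g'
      proof (cases "step0 ?c a g' = 0")
        case True then show ?thesis by simp
      next
        case False
        note sp = step0_supp[OF F(1) False]
        have c: "Cp Z X \<in> Iset" using Z X unfolding Iset_def by auto
        have G1: "g' @ ?t @ [Cp Z X] \<in> G" using sp F(3,4) c unfolding G_def M_def by auto
        have G2: "g' @ ?t \<in> G" using sp F(3,4) unfolding G_def M_def by auto
        have "(\<Sum>g\<in>G. step0 ?c a g' * ((if g = g' @ ?t @ [Cp Z X] then 1 else 0)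
           + (if Z = X \<and> g = g' @ ?t then 1 else 0)) * Val g x)
          = step0 ?c a g' * ((\<Sum>g\<in>G. (if g = g' @ ?t @ [Cp Z X] then 1 else 0) * Val g x)
           + (\<Sum>g\<in>G. (if Z = X \<and> g = g' @ ?t then 1 else 0) * Val g x))"
          by (simp add: sum_distrib_left distrib_left distrib_right sum.distrib mult.assoc)
        also have "(\<Sum>g\<in>G. (if Z = X \<and> g = g' @ ?t then 1 else 0) * Val g x) = (if Z = X then Val (g' @ ?t) x else 0)"
          by (cases "Z = X") (simp_all add: collapse[OF G2])
        finally show ?thesis unfolding collapse[OF G1] E_def by (simp add: add.commute)
      qed
      show "(\<Sum>g\<in>G. P (fst p) (snd p) * (\<Sum>g'\<in>G. step0 (hd (tl (snd p))) a g' *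
      ((if g = g' @ map toI (tl (tl (snd p))) @ [Cp (fst p) X] then 1 else 0)
       + (if fst p = X \<and> g = g' @ map toI (tl (tl (snd p))) then 1 else 0))) * Val g x)
        = P (fst p) (snd p) * (\<Sum>g'\<in>G. step0 (hd (tl (snd p))) a g' * E (fst p) (snd p) g')"
        unfolding pe fst_conv snd_conv trm[symmetric]
        by (simp add: sum_distrib_left sum_distrib_right mult.assoc) (rule sum.swap)
    qed
    finally show ?thesis by (simp add: split_def)
  qed
  finally show ?thesis .
qed

lemma head_item:
  assumes "h \<in> Iset"
  shows "itemser h (a#x) = (\<Sum>g\<in>G. stepw h a g * Val g x)"
proof -
  consider b where "h = Tm b" | W where "h = Vr W" "W \<in> V" | Y X where "h = Cp Y X" "Y \<in> V" "X \<in> V"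
    using assms unfolding Iset_def by auto
  then show ?thesis
  proof cases
    case 1 then show ?thesis using head_0[of "Inl b"] by (simp add: okc_def)
  next
    case 2 then show ?thesis using head_V by simp
  next
    case 3 then show ?thesis using head_C by simp
  qed
qed

lemma head_goal:
  assumes "h \<in> Iset"
  shows "Val (h#t) (a#x) = (\<Sum>g\<in>G. stepw h a g * Val (g @ t) x)"
proof -
  have "Val (h#t) (a#x) = cauchy (\<lambda>x. itemser h (a#x)) (Val t) x"
    by (simp add: Val_Cons cauchy_Cons itemser_qr[OF assms])
  also have "\<dots> = cauchy (\<lambda>x. \<Sum>g\<in>G. stepw h a g * Val g x) (Val t) x"
    using head_item[OF assms] by simp
  also have "\<dots> = (\<Sum>g\<in>G. stepw h a g * Val (g @ t) x)"
    by (simp add: cauchy_sum_left cauchy_smult_left Val_append)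
  finally show ?thesis .
qed

end


lemma sum_atMost_shift0: "(\<Sum>i\<le>n. f i) = f 0 + (\<Sum>j<n. f (Suc j))"
  by (induction n) (simp_all add: add.assoc)

lemma cauchy_shift:
  assumes "A [] = 0"
  shows "cauchy A B w = (\<Sum>j<length w. A (take (Suc j) w) * B (drop (Suc j) w))"
  unfolding cauchy_def sum_atMost_shift0 using assms by simp

lemma cauchy_snoc:
  assumes "A [] = 0" "B [] = 0"
  shows "cauchy A B (w @ [b]) = (\<Sum>j<length w. A (take (Suc j) w) * B (drop (Suc j) w @ [b]))"
proof -
  have "cauchy A B (w @ [b]) = (\<Sum>j<Suc (length w). A (take (Suc j) (w @ [b])) * B (drop (Suc j) (w @ [b])))"
    using cauchy_shift[where A=A and B=B and w="w @ [b]", OF assms(1)] by simp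
  also have "\<dots> = (\<Sum>j<length w. A (take (Suc j) (w @ [b])) * B (drop (Suc j) (w @ [b])))"
    using assms(2) by simp
  also have "\<dots> = (\<Sum>j<length w. A (take (Suc j) w) * B (drop (Suc j) w @ [b]))"
    by (intro sum.cong refl) auto
  finally show ?thesis .
qed

context algf
begin

definition enc :: "'a item list \<Rightarrow> nat" where "enc = (SOME h. bij_betw h G {0..<card G})"
definition dec :: "nat \<Rightarrow> 'a item list" where "dec = inv_into G enc"

lemma enc_bij: "bij_betw enc G {0..<card G}"
  unfolding enc_def using ex_bij_betw_finite_nat[OF finite_G] by (rule someI_ex)
definition "Qn = enc ` G"

lemma inj_enc: "inj_on enc G"
  using enc_bij by (rule bij_betw_imp_inj_on)

lemma dec_enc[simp]: "g \<in> G \<Longrightarrow> dec (enc g) = g"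
  unfolding dec_def using inj_enc by (rule inv_into_f_f)

lemma finite_Qn: "finite Qn" unfolding Qn_def using finite_G by simp

lemma sum_Qn: "(\<Sum>r\<in>Qn. f r) = (\<Sum>g\<in>G. f (enc g))"
  unfolding Qn_def by (rule sum.reindex[OF inj_enc, unfolded comp_def])

lemma nil_G: "[] \<in> G" unfolding G_def by simp

lemma tl_G: "s \<in> G \<Longrightarrow> tl s \<in> G"
  unfolding G_def by (cases s) auto

lemma G_hd: "h # t \<in> G \<Longrightarrow> h \<in> Iset" unfolding G_def by auto

definition Di :: "'a item list \<Rightarrow> 'a \<Rightarrow> 'a item list \<Rightarrow> 'k" where
  "Di s a r = (case s of [] \<Rightarrow> 0 | h # t \<Rightarrow>
      (\<Sum>g\<in>G. stepw h a g * (if (g = [] \<or> t = []) \<and> r = g @ t then 1 else 0)))"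
definition Dc :: "'a item list \<Rightarrow> 'a \<Rightarrow> 'a item list \<Rightarrow> 'k" where
  "Dc s a r = (case s of [] \<Rightarrow> 0 | h # t \<Rightarrow> if t \<noteq> [] \<and> r \<noteq> [] then stepw h a r else 0)"
definition E :: "'a item list \<Rightarrow> 'a \<Rightarrow> 'k" where
  "E s b = (case s of [h] \<Rightarrow> stepw h b [] | _ \<Rightarrow> 0)"

definition "di p a q = Di (dec p) a (dec q)"
definition "dc p a q = Dc (dec p) a (dec q)"
definition "dr p p0 b q = E (dec p) b * (if dec q = tl (dec p0) then 1 else 0)"

abbreviation "F \<equiv> Fn Qn dc di dr"

lemma enc_Qn: "g \<in> G \<Longrightarrow> enc g \<in> Qn" unfolding Qn_def by simp

lemma F_nil: assumes "s \<in> G" "r \<in> G" shows "F (enc s) [] (enc r) = (if s = r then 1 else 0)"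
proof -
  have "F (enc s) [] (enc r) = (if enc s = enc r then 1 else 0)" by (rule Fn_nil[OF enc_Qn[OF assms(1)]])
  then show ?thesis using inj_enc assms by (auto simp: inj_on_def)
qed

lemma F_Cons: "s \<in> G \<Longrightarrow> q \<in> Qn \<Longrightarrow> F (enc s) (a#w) q = (\<Sum>r\<in>G. Di s a r * F (enc r) w q)
    + (\<Sum>j<length w. \<Sum>r\<in>G. \<Sum>s2\<in>G. \<Sum>t\<in>G. Dc s a r * F (enc r) (take j w) (enc s2)
        * (E s2 (w!j) * (if t = tl s then 1 else 0)) * F (enc t) (drop (Suc j) w) q)"
  by (subst Fn_Cons[OF finite_Qn enc_Qn]) (simp_all add: sum_Qn di_def dc_def dr_def)


lemma call_collapse:
  fixes c :: "'a item list \<Rightarrow> 'k" and e g :: "'a item list \<Rightarrow> 'k" and f :: "'a item list \<Rightarrow> 'a item list \<Rightarrow> 'k"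
  assumes "t0 \<in> G"
  shows "(\<Sum>r\<in>G. \<Sum>s2\<in>G. \<Sum>t\<in>G. c r * f r s2 * (e s2 * (if t = t0 then 1 else 0)) * g t)
       = (\<Sum>r\<in>G. c r * (\<Sum>s2\<in>G. f r s2 * e s2) * g t0)"
proof -
  have "(\<Sum>t\<in>G. c r * f r s2 * (e s2 * (if t = t0 then 1 else 0)) * g t) = c r * f r s2 * e s2 * g t0" for r s2
  proof -
    have "(\<Sum>t\<in>G. c r * f r s2 * (e s2 * (if t = t0 then 1 else 0)) * g t)
        = (\<Sum>t\<in>G. if t = t0 then c r * f r s2 * e s2 * g t else 0)"
      by (intro sum.cong refl) auto
    then show ?thesis using assms finite_G by (simp add: sum.delta)
  qed
  then show ?thesis by (simp add: sum_distrib_left sum_distrib_right mult.assoc)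
qed

lemma F_Cons_sum:
  fixes K :: "'a item list \<Rightarrow> 'k"
  assumes s: "s \<in> G"
  shows "(\<Sum>q\<in>G. F (enc s) (a#w) (enc q) * K q) = (\<Sum>r\<in>G. Di s a r * (\<Sum>q\<in>G. F (enc r) w (enc q) * K q))
    + (\<Sum>j<length w. \<Sum>r\<in>G. \<Sum>s2\<in>G. \<Sum>t\<in>G. Dc s a r * F (enc r) (take j w) (enc s2)
        * (E s2 (w!j) * (if t = tl s then 1 else 0)) * (\<Sum>q\<in>G. F (enc t) (drop (Suc j) w) (enc q) * K q))"
proof -
  have "(\<Sum>q\<in>G. F (enc s) (a#w) (enc q) * K q) = (\<Sum>q\<in>G. (\<Sum>r\<in>G. Di s a r * F (enc r) w (enc q)) * K q)
    + (\<Sum>q\<in>G. (\<Sum>j<length w. \<Sum>r\<in>G. \<Sum>s2\<in>G. \<Sum>t\<in>G. Dc s a r * F (enc r) (take j w) (enc s2)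
        * (E s2 (w!j) * (if t = tl s then 1 else 0)) * F (enc t) (drop (Suc j) w) (enc q)) * K q)"
    by (simp add: F_Cons[OF s enc_Qn] distrib_right sum.distrib)
  also have "(\<Sum>q\<in>G. (\<Sum>r\<in>G. Di s a r * F (enc r) w (enc q)) * K q)
      = (\<Sum>r\<in>G. Di s a r * (\<Sum>q\<in>G. F (enc r) w (enc q) * K q))"
    by (simp add: sum_distrib_right sum_distrib_left mult.assoc) (rule sum.swap)
  also have "(\<Sum>q\<in>G. (\<Sum>j<length w. \<Sum>r\<in>G. \<Sum>s2\<in>G. \<Sum>t\<in>G. Dc s a r * F (enc r) (take j w) (enc s2)
        * (E s2 (w!j) * (if t = tl s then 1 else 0)) * F (enc t) (drop (Suc j) w) (enc q)) * K q)
      = (\<Sum>q\<in>G. \<Sum>j<length w. \<Sum>r\<in>G. \<Sum>s2\<in>G. \<Sum>t\<in>G. Dc s a r * F (enc r) (take j w) (enc s2)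
        * (E s2 (w!j) * (if t = tl s then 1 else 0)) * (F (enc t) (drop (Suc j) w) (enc q) * K q))"
    by (simp add: sum_distrib_right mult.assoc)
  also have "\<dots> = (\<Sum>j<length w. \<Sum>q\<in>G. \<Sum>r\<in>G. \<Sum>s2\<in>G. \<Sum>t\<in>G. Dc s a r * F (enc r) (take j w) (enc s2)
        * (E s2 (w!j) * (if t = tl s then 1 else 0)) * (F (enc t) (drop (Suc j) w) (enc q) * K q))"
    by (rule sum.swap)
  also have "\<dots> = (\<Sum>j<length w. \<Sum>r\<in>G. \<Sum>s2\<in>G. \<Sum>t\<in>G. \<Sum>q\<in>G. Dc s a r * F (enc r) (take j w) (enc s2)
        * (E s2 (w!j) * (if t = tl s then 1 else 0)) * (F (enc t) (drop (Suc j) w) (enc q) * K q))"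
    by (rule sum.cong[OF refl], rule swap13)
  also have "\<dots> = (\<Sum>j<length w. \<Sum>r\<in>G. \<Sum>s2\<in>G. \<Sum>t\<in>G. Dc s a r * F (enc r) (take j w) (enc s2)
        * (E s2 (w!j) * (if t = tl s then 1 else 0)) * (\<Sum>q\<in>G. F (enc t) (drop (Suc j) w) (enc q) * K q))"
    by (simp add: sum_distrib_left)
  finally show ?thesis .
qed

lemma Di_sum:
  assumes "h # t0 \<in> G"
  shows "(\<Sum>r\<in>G. Di (h # t0) a r * f r) = (\<Sum>g\<in>G. stepw h a g * (if g = [] \<or> t0 = [] then f (g @ t0) else 0))"
proof -
  have t0: "t0 \<in> G" using tl_G[OF assms] by simp
  have "(\<Sum>r\<in>G. Di (h # t0) a r * f r) = (\<Sum>r\<in>G. \<Sum>g\<in>G. stepw h a g * ((if (g = [] \<or> t0 = []) \<and> r = g @ t0 then 1 else 0) * f r))"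
    unfolding Di_def by (simp add: sum_distrib_right mult.assoc)
  also have "\<dots> = (\<Sum>g\<in>G. stepw h a g * (\<Sum>r\<in>G. (if (g = [] \<or> t0 = []) \<and> r = g @ t0 then 1 else 0) * f r))"
    by (subst sum.swap) (simp add: sum_distrib_left)
  also have "\<dots> = (\<Sum>g\<in>G. stepw h a g * (if g = [] \<or> t0 = [] then f (g @ t0) else 0))"
  proof (rule sum.cong[OF refl])
    fix g assume g: "g \<in> G"
    show "stepw h a g * (\<Sum>r\<in>G. (if (g = [] \<or> t0 = []) \<and> r = g @ t0 then 1 else 0) * f r)
        = stepw h a g * (if g = [] \<or> t0 = [] then f (g @ t0) else 0)"
    proof (cases "g = [] \<or> t0 = []")
      case True
      then have "g @ t0 \<in> G" using g t0 by auto
      moreover have "(\<Sum>r\<in>G. (if (g = [] \<or> t0 = []) \<and> r = g @ t0 then 1 else 0) * f r)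
          = (\<Sum>r\<in>G. if r = g @ t0 then f r else 0)" using True by (intro sum.cong) auto
      ultimately show ?thesis using True finite_G by (simp add: sum.delta)
    qed simp
  qed
  finally show ?thesis .
qed

lemma Dc_sum:
  "(\<Sum>r\<in>G. Dc (h # t0) a r * f r) = (\<Sum>g\<in>G. stepw h a g * (if t0 \<noteq> [] \<and> g \<noteq> [] then f g else 0))"
  unfolding Dc_def by (intro sum.cong refl) auto

lemma Val_G_qr: "g \<in> G \<Longrightarrow> g \<noteq> [] \<Longrightarrow> Val g [] = 0"
  using Val_at_nil unfolding G_def by auto

lemma main_FV:
  shows "(\<forall>s\<in>G. F (enc s) w (enc []) = Val s w)
       \<and> (\<forall>s\<in>G. \<forall>b. (\<Sum>q\<in>G. F (enc s) w (enc q) * E q b) = Val s (w @ [b]))"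
proof (induction "length w" arbitrary: w rule: less_induct)
  case less
  show ?case
  proof (cases w)
    case Nil
    have I: "F (enc s) [] (enc []) = Val s []" if s: "s \<in> G" for s
      using F_nil[OF s nil_G] Val_at_nil[of s] s unfolding G_def by auto
    have II: "(\<Sum>q\<in>G. F (enc s) [] (enc q) * E q b) = Val s [b]" if s: "s \<in> G" for s b
    proof -
      have "(\<Sum>q\<in>G. F (enc s) [] (enc q) * E q b) = (\<Sum>q\<in>G. if q = s then E q b else 0)"
        by (intro sum.cong refl) (auto simp: F_nil[OF s])
      also have "\<dots> = E s b" using s finite_G by (simp add: sum.delta')
      also have "\<dots> = Val s [b]"
      proof (cases s)
        case Nil then show ?thesis by (simp add: E_def Val_nil char_series_def)
      next
        case (Cons h t0)
        have hI: "h \<in> Iset" using s Cons G_hd by simp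
        have "Val s [b] = (\<Sum>g\<in>G. stepw h b g * Val (g @ t0) [])"
          unfolding Cons by (rule head_goal[OF hI])
        also have "\<dots> = (\<Sum>g\<in>G. if g = [] then (if t0 = [] then stepw h b g else 0) else 0)"
        proof (rule sum.cong[OF refl])
          fix g assume g: "g \<in> G"
          have "set (g @ t0) \<subseteq> Iset" using g s Cons unfolding G_def by auto
          then show "stepw h b g * Val (g @ t0) [] = (if g = [] then (if t0 = [] then stepw h b g else 0) else 0)"
            by (simp add: Val_at_nil)
        qed
        also have "\<dots> = (if t0 = [] then stepw h b [] else 0)" using nil_G finite_G by (simp add: sum.delta)
        finally show ?thesis unfolding Cons E_def by (cases t0) auto
      qed
      finally show ?thesis .
    qed
    show ?thesis using I II Nil by simp
  next
    case (Cons a w')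
    have IH_I: "F (enc s) v (enc []) = Val s v" if "length v < length w" "s \<in> G" for s v
      using less.hyps[OF that(1)] that(2) by blast
    have IH_II: "(\<Sum>q\<in>G. F (enc s) v (enc q) * E q b) = Val s (v @ [b])" if "length v < length w" "s \<in> G" for s v b
      using less.hyps[OF that(1)] that(2) by blast
    have lw: "length w' < length w" "\<And>j. length (take j w') < length w" "\<And>j. length (drop j w') < length w"
      using Cons by auto
    have I: "F (enc s) (a#w') (enc []) = Val s (a#w')" if s: "s \<in> G" for s
    proof (cases s)
      case Nil
      have "F (enc s) (a#w') (enc []) = 0"
        using F_Cons[OF s enc_Qn[OF nil_G], of a w'] Nil by (simp add: Di_def Dc_def)
      then show ?thesis using Nil by (simp add: Val_nil char_series_def)
    next
      case (Cons h t0)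
      have hI: "h \<in> Iset" using s Cons G_hd by simp
      have t0: "t0 \<in> G" using tl_G[OF s] Cons by simp
      have "F (enc s) (a#w') (enc []) = (\<Sum>r\<in>G. Di s a r * F (enc r) w' (enc []))
        + (\<Sum>j<length w'. \<Sum>r\<in>G. \<Sum>s2\<in>G. \<Sum>t\<in>G. Dc s a r * F (enc r) (take j w') (enc s2)
          * (E s2 (w'!j) * (if t = tl s then 1 else 0)) * F (enc t) (drop (Suc j) w') (enc []))"
        by (rule F_Cons[OF s enc_Qn[OF nil_G]])
      also have "(\<Sum>r\<in>G. Di s a r * F (enc r) w' (enc [])) = (\<Sum>r\<in>G. Di s a r * Val r w')"
        by (intro sum.cong refl) (simp add: IH_I[OF lw(1)])
      also have "\<dots> = (\<Sum>g\<in>G. stepw h a g * (if g = [] \<or> t0 = [] then Val (g @ t0) w' else 0))"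
        unfolding Cons by (rule Di_sum[OF s[unfolded Cons]])
      also have "(\<Sum>j<length w'. \<Sum>r\<in>G. \<Sum>s2\<in>G. \<Sum>t\<in>G. Dc s a r * F (enc r) (take j w') (enc s2)
          * (E s2 (w'!j) * (if t = tl s then 1 else 0)) * F (enc t) (drop (Suc j) w') (enc []))
        = (\<Sum>j<length w'. \<Sum>r\<in>G. Dc s a r * (\<Sum>s2\<in>G. F (enc r) (take j w') (enc s2) * E s2 (w'!j)) * F (enc t0) (drop (Suc j) w') (enc []))"
        using call_collapse[OF t0] Cons by simp
      also have "\<dots> = (\<Sum>j<length w'. \<Sum>r\<in>G. Dc s a r * Val r (take (Suc j) w') * Val t0 (drop (Suc j) w'))"
        by (intro sum.cong refl) (simp add: IH_II[OF lw(2)] IH_I[OF lw(3) t0] take_Suc_conv_app_nth)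
      also have "\<dots> = (\<Sum>r\<in>G. Dc s a r * cauchy (Val r) (Val t0) w')"
      proof -
        have "(\<Sum>j<length w'. \<Sum>r\<in>G. Dc s a r * Val r (take (Suc j) w') * Val t0 (drop (Suc j) w'))
            = (\<Sum>r\<in>G. Dc s a r * (\<Sum>j<length w'. Val r (take (Suc j) w') * Val t0 (drop (Suc j) w')))"
          by (subst sum.swap) (simp add: sum_distrib_left mult.assoc)
        also have "\<dots> = (\<Sum>r\<in>G. Dc s a r * cauchy (Val r) (Val t0) w')"
        proof (rule sum.cong[OF refl])
          fix r assume r: "r \<in> G"
          show "Dc s a r * (\<Sum>j<length w'. Val r (take (Suc j) w') * Val t0 (drop (Suc j) w')) = Dc s a r * cauchy (Val r) (Val t0) w'"
          proof (cases "r = []")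
            case True then show ?thesis using Cons by (simp add: Dc_def)
          next
            case False then show ?thesis by (simp add: cauchy_shift Val_G_qr[OF r])
          qed
        qed
        finally show ?thesis .
      qed
      also have "\<dots> = (\<Sum>g\<in>G. stepw h a g * (if t0 \<noteq> [] \<and> g \<noteq> [] then Val (g @ t0) w' else 0))"
        unfolding Cons Dc_sum Val_append ..
      also have "(\<Sum>g\<in>G. stepw h a g * (if g = [] \<or> t0 = [] then Val (g @ t0) w' else 0))
           + (\<Sum>g\<in>G. stepw h a g * (if t0 \<noteq> [] \<and> g \<noteq> [] then Val (g @ t0) w' else 0))
           = (\<Sum>g\<in>G. stepw h a g * Val (g @ t0) w')"
        by (simp add: sum.distrib[symmetric] distrib_left[symmetric]) (intro sum.cong refl, auto)
      also have "\<dots> = Val s (a#w')" unfolding Cons by (rule head_goal[OF hI, symmetric])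
      finally show ?thesis .
    qed
    have II: "(\<Sum>q\<in>G. F (enc s) (a#w') (enc q) * E q b) = Val s ((a#w') @ [b])" if s: "s \<in> G" for s b
    proof (cases s)
      case Nil
      have "F (enc s) (a#w') (enc q) = 0" if "q \<in> G" for q
        using F_Cons[OF s enc_Qn[OF that], of a w'] Nil by (simp add: Di_def Dc_def)
      then have "(\<Sum>q\<in>G. F (enc s) (a#w') (enc q) * E q b) = 0" by simp
      then show ?thesis using Nil by (simp add: Val_nil char_series_def)
    next
      case (Cons h t0)
      have hI: "h \<in> Iset" using s Cons G_hd by simp
      have t0: "t0 \<in> G" using tl_G[OF s] Cons by simp
      let ?K = "\<lambda>q. E q b"
      have "(\<Sum>q\<in>G. F (enc s) (a#w') (enc q) * E q b) = (\<Sum>r\<in>G. Di s a r * (\<Sum>q\<in>G. F (enc r) w' (enc q) * ?K q))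
        + (\<Sum>j<length w'. \<Sum>r\<in>G. \<Sum>s2\<in>G. \<Sum>t\<in>G. Dc s a r * F (enc r) (take j w') (enc s2)
          * (E s2 (w'!j) * (if t = tl s then 1 else 0)) * (\<Sum>q\<in>G. F (enc t) (drop (Suc j) w') (enc q) * ?K q))"
        by (rule F_Cons_sum[OF s])
      also have "(\<Sum>r\<in>G. Di s a r * (\<Sum>q\<in>G. F (enc r) w' (enc q) * ?K q)) = (\<Sum>r\<in>G. Di s a r * Val r (w' @ [b]))"
        by (intro sum.cong refl) (simp add: IH_II[OF lw(1)])
      also have "\<dots> = (\<Sum>g\<in>G. stepw h a g * (if g = [] \<or> t0 = [] then Val (g @ t0) (w' @ [b]) else 0))"
        unfolding Cons by (rule Di_sum[OF s[unfolded Cons]])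
      also have "(\<Sum>j<length w'. \<Sum>r\<in>G. \<Sum>s2\<in>G. \<Sum>t\<in>G. Dc s a r * F (enc r) (take j w') (enc s2)
          * (E s2 (w'!j) * (if t = tl s then 1 else 0)) * (\<Sum>q\<in>G. F (enc t) (drop (Suc j) w') (enc q) * ?K q))
        = (\<Sum>j<length w'. \<Sum>r\<in>G. Dc s a r * (\<Sum>s2\<in>G. F (enc r) (take j w') (enc s2) * E s2 (w'!j))
            * (\<Sum>q\<in>G. F (enc t0) (drop (Suc j) w') (enc q) * ?K q))"
        using call_collapse[OF t0] Cons by simp
      also have "\<dots> = (\<Sum>j<length w'. \<Sum>r\<in>G. Dc s a r * Val r (take (Suc j) w') * Val t0 (drop (Suc j) w' @ [b]))"
        by (intro sum.cong refl) (simp add: IH_II[OF lw(2)] IH_II[OF lw(3) t0] take_Suc_conv_app_nth)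
      also have "\<dots> = (\<Sum>r\<in>G. Dc s a r * cauchy (Val r) (Val t0) (w' @ [b]))"
      proof -
        have "(\<Sum>j<length w'. \<Sum>r\<in>G. Dc s a r * Val r (take (Suc j) w') * Val t0 (drop (Suc j) w' @ [b]))
            = (\<Sum>r\<in>G. Dc s a r * (\<Sum>j<length w'. Val r (take (Suc j) w') * Val t0 (drop (Suc j) w' @ [b])))"
          by (subst sum.swap) (simp add: sum_distrib_left mult.assoc)
        also have "\<dots> = (\<Sum>r\<in>G. Dc s a r * cauchy (Val r) (Val t0) (w' @ [b]))"
        proof (rule sum.cong[OF refl])
          fix r assume r: "r \<in> G"
          show "Dc s a r * (\<Sum>j<length w'. Val r (take (Suc j) w') * Val t0 (drop (Suc j) w' @ [b])) = Dc s a r * cauchy (Val r) (Val t0) (w' @ [b])"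
          proof (cases "r = [] \<or> t0 = []")
            case True then show ?thesis using Cons by (auto simp: Dc_def)
          next
            case False then show ?thesis by (simp add: cauchy_snoc Val_G_qr[OF r] Val_G_qr[OF t0])
          qed
        qed
        finally show ?thesis .
      qed
      also have "\<dots> = (\<Sum>g\<in>G. stepw h a g * (if t0 \<noteq> [] \<and> g \<noteq> [] then Val (g @ t0) (w' @ [b]) else 0))"
        unfolding Cons Dc_sum Val_append ..
      also have "(\<Sum>g\<in>G. stepw h a g * (if g = [] \<or> t0 = [] then Val (g @ t0) (w' @ [b]) else 0))
           + (\<Sum>g\<in>G. stepw h a g * (if t0 \<noteq> [] \<and> g \<noteq> [] then Val (g @ t0) (w' @ [b]) else 0))
           = (\<Sum>g\<in>G. stepw h a g * Val (g @ t0) (w' @ [b]))"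
        by (simp add: sum.distrib[symmetric] distrib_left[symmetric]) (intro sum.cong refl, auto)
      also have "\<dots> = Val s ((a#w') @ [b])" unfolding Cons append_Cons by (rule head_goal[OF hI, symmetric])
      finally show ?thesis .
    qed
    show ?thesis using I II Cons by simp
  qed
qed


lemma final:
  assumes X0: "X0 \<in> V"
  shows "\<exists>S' :: 'a nword \<Rightarrow> 'k. regular_nw_series S' \<and> proj S' = S X0"
proof -
  define \<iota> :: "nat \<Rightarrow> 'k" where "\<iota> p = (if p = enc [Vr X0] then 1 else 0)" for p
  define \<kappa> :: "nat \<Rightarrow> 'k" where "\<kappa> q = (if q = enc [] then 1 else 0)" for q
  define S' where "S' = wnwa_behaviour Qn \<iota> dc di dr \<kappa>"
  have reg: "regular_nw_series S'"
    unfolding regular_nw_series_def S'_def using finite_Qn by blast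
  have g0: "[Vr X0] \<in> G" using X0 unfolding G_def Iset_def M_def by auto
  have "proj S' w = S X0 w" for w
  proof (cases "w = []")
    case True then show ?thesis using proj_nil qr X0 by simp
  next
    case False
    have "proj S' w = (\<Sum>p\<in>Qn. \<Sum>q\<in>Qn. \<iota> p * F p w q * \<kappa> q)"
      unfolding S'_def by (rule proj_Fn[OF finite_Qn False])
    also have "\<dots> = (\<Sum>p\<in>Qn. if p = enc [Vr X0] then F p w (enc []) else 0)"
    proof (rule sum.cong[OF refl])
      fix p assume "p \<in> Qn"
      have "(\<Sum>q\<in>Qn. \<iota> p * F p w q * \<kappa> q) = (\<Sum>q\<in>Qn. if q = enc [] then \<iota> p * F p w q else 0)"
        by (intro sum.cong refl) (simp add: \<kappa>_def)
      also have "\<dots> = \<iota> p * F p w (enc [])" using enc_Qn[OF nil_G] finite_Qn by (simp add: sum.delta)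
      finally show "(\<Sum>q\<in>Qn. \<iota> p * F p w q * \<kappa> q) = (if p = enc [Vr X0] then F p w (enc []) else 0)"
        by (simp add: \<iota>_def)
    qed
    also have "\<dots> = F (enc [Vr X0]) w (enc [])"
      using enc_Qn[OF g0] finite_Qn by (simp add: sum.delta)
    also have "\<dots> = Val [Vr X0] w" using main_FV g0 by blast
    also have "\<dots> = S X0 w" by (simp add: Val_Cons Val_nil cauchy_unit_right)
    finally show ?thesis .
  qed
  then show ?thesis using reg by blast
qed

end

theorem proposition6p5:
  fixes R :: "'a::finite list \<Rightarrow> 'k::comm_semiring_1"
  assumes "(0::'k) \<noteq> 1"
    and "algebraic_series R"
  shows "\<exists>S :: 'a nword \<Rightarrow> 'k. regular_nw_series S \<and> proj S = R"
proof -
  obtain V P S X0 where a: "alg_system V P" "proper_system V P" "X0 \<in> V" "is_solution V P S"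
    "\<forall>X \<in> V. quasiregular (S X)" "R = S X0"
    using assms(2) unfolding algebraic_series_def by blast
  interpret algf V P S
    by unfold_locales (use a in \<open>auto simp: quasiregular_def\<close>)
  show ?thesis using final[OF a(3)] a(6) by simp
qed


end
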